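(* In the setting of short geodesics, for all sufficiently small $s>0$, $$0<\tau(0,y,\sigma_s)\le C \quad\text{and}\quad 0<l(\gamma_s)=s\,\tau(0,y,\sigma_s)\le Cs,$$ where $C$ depends only on the metric $h$.
   Context: Gas giant setting. $M$ is a compact manifold with boundary, $\dim M=n\ge 2$, and $g=\rho^{-1}\bar g$ with $\bar g$ smooth up to the boundary and $\rho$ a boundary defining function. Near $\partial M$ there are coordinates $(x,y)$ in which $g=\mathrm{d}x^2+x^{-2}h(x,y,\mathrm{d}y)$, with $h_x$ a family of metrics on $\partial M$ smooth in $x$ up to $x=0$. Dual coordinates are $(\xi,\eta)$. Geodesic flow. $\phi_t$ is the Hamiltonian flow of $H=\tfrac12\xi^2+\tfrac12x^2h^{ij}\eta_i\eta_j$: - $\dot x=\xi$, - $\dot y^i=x^2h^{ij}\eta_j$, - $\dot\xi=-xh^{ij}\eta_i\eta_j-\tfrac12x^2\partial_xh^{ij}\eta_i\eta_j$, - $\dot\eta_i=-\tfrac12x^2\partial_{y^i}h^{kj}\eta_k\eta_j$. Short geodesics. Fix $y\in\partial M$ and $\eta\in T^*_y\partial M$ with $h^{ij}(0,y)\eta_i\eta_j=1$. For $s>0$ let $\sigma_s=(s,\eta)$, i.e. $\xi=s$, and $\gamma_s(t)=\phi_t(0,y,\sigma_s)$. Here $\tau(0,y,\sigma_s)$ is the first positive time at which $x$ returns to $0$, and $l(\gamma_s)$ is the $g$-length of the projected curve; the speed is constant equal to $s$. *)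

theory Defs
  imports "HOL-Analysis.Analysis"
begin

text \<open>Smoothness (C-infinity) up to the boundary with uniformly bounded derivatives of
all orders on S.  F vs z is the iterated derivative of f at z in the directions vs
(innermost direction last); each F vs is continuous and differentiable within S, with
derivative w mapsto F (w # vs) z.\<close>
definition smooth_bdd_on :: "'a::real_normed_vector set \<Rightarrow> ('a \<Rightarrow> real) \<Rightarrow> bool" where
  "smooth_bdd_on S f \<longleftrightarrow>
     (\<exists>F :: 'a list \<Rightarrow> 'a \<Rightarrow> real.
        (\<forall>z\<in>S. F [] z = f z) \<and>
        (\<forall>vs. continuous_on S (F vs)) \<and>
        (\<forall>vs. \<forall>z\<in>S. (F vs has_derivative (\<lambda>w. F (w # vs) z)) (at z within S)) \<and>
        (\<forall>vs. \<exists>B. \<forall>z\<in>S. \<bar>F vs z\<bar> \<le> B * prod_list (map norm vs)))"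

text \<open>Collar model of the gas giant metric: h x y is the matrix (h_ij) of the metric h_x on
the boundary at the point y (boundary coordinates in real^'n), for 0 <= x <= x0.
Symmetric, uniformly positive definite, smooth up to x = 0 with bounded derivatives
(local model of compactness of the boundary).\<close>
definition gas_giant_family :: "(real \<Rightarrow> real^'n \<Rightarrow> real^'n^'n) \<Rightarrow> real \<Rightarrow> bool" where
  "gas_giant_family h x0 \<longleftrightarrow>
     0 < x0 \<and>
     (\<forall>x\<in>{0..x0}. \<forall>y. transpose (h x y) = h x y) \<and>
     (\<exists>c>0. \<forall>x\<in>{0..x0}. \<forall>y v. c * (norm v)^2 \<le> v \<bullet> (h x y *v v)) \<and>
     (\<forall>i j. smooth_bdd_on ({0..x0} \<times> UNIV) (\<lambda>(x, y). h x y $ i $ j))"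

definition cometric :: "(real \<Rightarrow> real^'n \<Rightarrow> real^'n^'n) \<Rightarrow> real \<Rightarrow> real^'n \<Rightarrow> real^'n^'n" where
  "cometric h x y = matrix_inv (h x y)"

definition conorm2 :: "(real \<Rightarrow> real^'n \<Rightarrow> real^'n^'n) \<Rightarrow> real \<Rightarrow> real^'n \<Rightarrow> real^'n \<Rightarrow> real" where
  "conorm2 h x y \<eta> = \<eta> \<bullet> (cometric h x y *v \<eta>)"

text \<open>(X, Y, Xi, E) solves Hamilton's equations for H = xi^2/2 + x^2 h^ij eta_i eta_j / 2
on the time interval [0, T].\<close>
definition geodesic_flow_curve ::
  "(real \<Rightarrow> real^'n \<Rightarrow> real^'n^'n) \<Rightarrow> (real \<Rightarrow> real) \<Rightarrow> (real \<Rightarrow> real^'n)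
     \<Rightarrow> (real \<Rightarrow> real) \<Rightarrow> (real \<Rightarrow> real^'n) \<Rightarrow> real \<Rightarrow> bool" where
  "geodesic_flow_curve h X Y Xi E T \<longleftrightarrow> 0 \<le> T \<and>
     (\<forall>t\<in>{0..T}.
        (X has_real_derivative Xi t) (at t within {0..T}) \<and>
        (Y has_vector_derivative ((X t)^2 *\<^sub>R (cometric h (X t) (Y t) *v E t))) (at t within {0..T}) \<and>
        (\<exists>dx dy.
           ((\<lambda>x. conorm2 h x (Y t) (E t)) has_real_derivative dx) (at (X t) within {0..}) \<and>
           ((\<lambda>y. conorm2 h (X t) y (E t)) has_derivative (\<lambda>v. dy \<bullet> v)) (at (Y t)) \<and>
           (Xi has_real_derivative
              (- (X t * conorm2 h (X t) (Y t) (E t)) - 1/2 * (X t)^2 * dx)) (at t within {0..T}) \<and>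
           (E has_vector_derivative (- (1/2 * (X t)^2) *\<^sub>R dy)) (at t within {0..T})))"

text \<open>g-length of the projected curve t mapsto (X t, Y t), t in [0,T], for
g = dx^2 + x^(-2) h(x, y, dy).\<close>
definition g_length_is ::
  "(real \<Rightarrow> real^'n \<Rightarrow> real^'n^'n) \<Rightarrow> (real \<Rightarrow> real) \<Rightarrow> (real \<Rightarrow> real^'n) \<Rightarrow> real \<Rightarrow> real \<Rightarrow> bool" where
  "g_length_is h X Y T L \<longleftrightarrow>
     ((\<lambda>t. sqrt ((vector_derivative X (at t within {0..T}))^2
          + (vector_derivative Y (at t within {0..T})) \<bullet>
              (h (X t) (Y t) *v vector_derivative Y (at t within {0..T})) / (X t)^2))
       has_integral L) {0..T}"

end

theory Submission
  imports Defs "HOL-Analysis.Analysis"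
begin

lemma exp_term_small: "\<exists>k. (a::real)^k / fact k < 1"
proof -
  have "(\<lambda>n. inverse (fact n) * a^n) \<longlonglongrightarrow> 0"
    using summable_LIMSEQ_zero[OF summable_exp[of a]] by simp
  then have "\<forall>\<^sub>F n in sequentially. inverse (fact n) * a^n < 1"
    by (rule order_tendstoD) simp
  then obtain N where "\<forall>n\<ge>N. inverse (fact n) * a^n < 1" unfolding eventually_sequentially by blast
  then have "inverse (fact N) * a^N < 1" by blast
  then show ?thesis by (intro exI[of _ N]) (simp add: divide_inverse mult.commute)
qed

lemma poly_integral:
  fixes t L D :: real
  assumes "0 \<le> t"
  shows "integral {0..t} (\<lambda>r. L * ((L * r)^k / fact k * D)) = (L * t)^Suc k / fact (Suc k) * D"
proof -
  define c where "c = L^Suc k * D / fact (Suc k)"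
  have eq1: "(\<lambda>r. (L * r)^Suc k / fact (Suc k) * D) = (\<lambda>r. c * r^Suc k)"
    by (auto simp: c_def power_mult_distrib)
  have eq2: "(\<lambda>r. L * ((L * r)^k / fact k * D)) = (\<lambda>r. c * (real (Suc k) * r^k))"
  proof
    fix r
    have "fact (Suc k) = real (Suc k) * (fact k::real)" by simp
    then show "L * ((L * r)^k / fact k * D) = c * (real (Suc k) * r^k)"
      unfolding c_def by (simp add: power_mult_distrib field_simps del: of_nat_Suc)
  qed
  have "((\<lambda>r. c * (real (Suc k) * r^k)) has_integral ((\<lambda>r. c * r^Suc k) t - (\<lambda>r. c * r^Suc k) 0)) {0..t}"
  proof (rule fundamental_theorem_of_calculus[OF assms])
    fix x assume "x \<in> {0..t}"
    have "((\<lambda>r. r^Suc k) has_real_derivative (real (Suc k) * x^(Suc k - Suc 0))) (at x within {0..t})"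
      by (rule has_field_derivative_at_within[OF DERIV_pow])
    then have "((\<lambda>r. c * r^Suc k) has_real_derivative c * (real (Suc k) * x^(Suc k - Suc 0))) (at x within {0..t})"
      by (rule DERIV_cmult)
    then have "((\<lambda>r. c * r^Suc k) has_real_derivative c * (real (Suc k) * x^k)) (at x within {0..t})"
      by simp
    then show "((\<lambda>r. c * r^Suc k) has_vector_derivative c * (real (Suc k) * x^k)) (at x within {0..t})"
      by (simp add: has_real_derivative_iff_has_vector_derivative)
  qed
  then have "((\<lambda>r. c * (real (Suc k) * r^k)) has_integral c * t^Suc k) {0..t}"
    by simp
  then have "integral {0..t} (\<lambda>r. c * (real (Suc k) * r^k)) = c * t^Suc k"
    by (rule integral_unique)
  then have "integral {0..t} (\<lambda>r. L * ((L * r)^k / fact k * D)) = c * t^Suc k"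
    by (simp only: eq2)
  moreover have "(L * t)^Suc k / fact (Suc k) * D = c * t^Suc k"
    using fun_cong[OF eq1, of t] by simp
  ultimately show ?thesis by simp
qed


lemma lip_cont:
  fixes f :: "'a::real_normed_vector \<Rightarrow> 'b::real_normed_vector"
  assumes Lf: "\<And>x y. norm (f x - f y) \<le> L * norm (x - y)" and L0: "0 \<le> L"
  shows "continuous_on S f"
proof -
  have "L-lipschitz_on S f"
    using Lf L0 by (intro lipschitz_onI) (auto simp: dist_norm)
  then show ?thesis by (rule lipschitz_on_continuous_on)
qed

lemma ode_exists:
  fixes f :: "'a::banach \<Rightarrow> 'a" and L Tm :: real and z0 :: 'a
  assumes Lf: "\<And>x y. norm (f x - f y) \<le> L * norm (x - y)" and L0: "0 \<le> L" and T0: "0 \<le> Tm"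
  shows "\<exists>\<phi>. \<phi> 0 = z0 \<and> continuous_on {0..Tm} \<phi> \<and>
           (\<forall>t\<in>{0..Tm}. (\<phi> has_vector_derivative f (\<phi> t)) (at t within {0..Tm}))"
proof -
  have contf: "continuous_on S f" for S using lip_cont[OF Lf L0] .
  define cl where "cl t = max 0 (min Tm t)" for t :: real
  have cl_in: "cl t \<in> {0..Tm}" for t using T0 by (auto simp: cl_def)
  have cl_id: "t \<in> {0..Tm} \<Longrightarrow> cl t = t" for t by (auto simp: cl_def)
  have cl_cl: "cl (cl t) = cl t" for t using cl_id[OF cl_in] .
  have cont_cl: "continuous_on UNIV cl" unfolding cl_def by (intro continuous_intros)
  define G where "G \<phi> t = z0 + integral {0..cl t} (\<lambda>r. f (\<phi> r))" for \<phi> :: "real \<Rightarrow> 'a" and t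
  have intf: "(\<lambda>r. f (\<phi> r)) integrable_on {0..s}" if "continuous_on UNIV \<phi>" for \<phi> :: "real \<Rightarrow> 'a" and s :: real
  proof -
    have "continuous_on {0..s} \<phi>" using that by (rule continuous_on_subset) auto
    then have "continuous_on {0..s} (\<lambda>r. f (\<phi> r))"
      using continuous_on_compose2[OF contf[of UNIV]] by blast
    then show ?thesis by (rule integrable_continuous_interval)
  qed
  have Gb: "G \<phi> \<in> bcontfun" if cphi: "continuous_on UNIV \<phi>" for \<phi>
  proof -
    define I where "I s = z0 + integral {0..s} (\<lambda>r. f (\<phi> r))" for s
    have cI: "continuous_on {0..Tm} I"
      unfolding I_def by (intro continuous_intros indefinite_integral_continuous_1 intf[OF cphi])
    have GI: "G \<phi> = I \<circ> cl" by (auto simp: G_def I_def)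
    have c1: "continuous_on UNIV (G \<phi>)"
      unfolding GI by (rule continuous_on_compose[OF cont_cl continuous_on_subset[OF cI]]) (use cl_in in auto)
    have "range (G \<phi>) \<subseteq> I ` {0..Tm}" unfolding GI using cl_in by auto
    moreover have "compact (I ` {0..Tm})" by (rule compact_continuous_image[OF cI compact_Icc])
    ultimately have "bounded (range (G \<phi>))" by (meson bounded_subset compact_imp_bounded)
    with c1 show ?thesis unfolding bcontfun_def by auto
  qed
  define P where "P \<phi> = Bcontfun (G (apply_bcontfun \<phi>))" for \<phi> :: "real \<Rightarrow>\<^sub>C 'a"
  have Papp: "apply_bcontfun (P \<phi>) t = G (apply_bcontfun \<phi>) t" for \<phi> t
    unfolding P_def using Gb[of "apply_bcontfun \<phi>"] by (simp add: Bcontfun_inverse)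
  have est: "norm (apply_bcontfun ((P^^k) \<phi>) t - apply_bcontfun ((P^^k) \<psi>) t) \<le> (L*t)^k / fact k * dist \<phi> \<psi>"
    if "t \<in> {0..Tm}" for k \<phi> \<psi> t
    using that
  proof (induction k arbitrary: t)
    case 0
    then show ?case using dist_bounded[of \<phi> t \<psi>] by (simp add: dist_norm)
  next
    case (Suc k)
    define a where "a = apply_bcontfun ((P^^k) \<phi>)"
    define b where "b = apply_bcontfun ((P^^k) \<psi>)"
    have ca: "continuous_on UNIV a" and cb: "continuous_on UNIV b" unfolding a_def b_def by auto
    have t: "0 \<le> t" "t \<le> Tm" using Suc.prems by auto
    have "apply_bcontfun ((P^^Suc k) \<phi>) t - apply_bcontfun ((P^^Suc k) \<psi>) t
          = integral {0..t} (\<lambda>r. f (a r)) - integral {0..t} (\<lambda>r. f (b r))"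
      using Papp cl_id[OF Suc.prems] by (simp add: a_def b_def G_def)
    also have "\<dots> = integral {0..t} (\<lambda>r. f (a r) - f (b r))"
      by (rule integral_diff[symmetric]) (use intf[OF ca] intf[OF cb] in auto)
    finally have eq: "apply_bcontfun ((P^^Suc k) \<phi>) t - apply_bcontfun ((P^^Suc k) \<psi>) t
          = integral {0..t} (\<lambda>r. f (a r) - f (b r))" .
    have "norm (integral {0..t} (\<lambda>r. f (a r) - f (b r))) \<le> integral {0..t} (\<lambda>r. L * ((L * r)^k / fact k * dist \<phi> \<psi>))"
    proof (rule integral_norm_bound_integral)
      show "(\<lambda>r. f (a r) - f (b r)) integrable_on {0..t}"
        using intf[OF ca] intf[OF cb] by (rule integrable_diff)
      show "(\<lambda>r. L * ((L * r)^k / fact k * dist \<phi> \<psi>)) integrable_on {0..t}"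
        by (rule integrable_continuous_interval) (intro continuous_intros, simp)
      fix r assume r: "r \<in> {0..t}"
      have "norm (f (a r) - f (b r)) \<le> L * norm (a r - b r)" by (rule Lf)
      also have "\<dots> \<le> L * ((L * r)^k / fact k * dist \<phi> \<psi>)"
        using Suc.IH[of r] r t L0 unfolding a_def b_def by (intro mult_left_mono) auto
      finally show "norm (f (a r) - f (b r)) \<le> L * ((L * r)^k / fact k * dist \<phi> \<psi>)" .
    qed
    also have "\<dots> = (L * t)^Suc k / fact (Suc k) * dist \<phi> \<psi>"
      by (rule poly_integral[OF t(1)])
    finally show ?case using eq by simp
  qed
  obtain k where k: "(L*Tm)^k / fact k < 1" using exp_term_small by blast
  have k1: "k \<noteq> 0" using k by (cases k) auto
  have Pcl: "apply_bcontfun (P \<phi>) t = apply_bcontfun (P \<phi>) (cl t)" for \<phi> t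
    by (simp add: Papp G_def cl_cl)
  have Pkcl: "apply_bcontfun ((P^^k) \<phi>) t = apply_bcontfun ((P^^k) \<phi>) (cl t)" for \<phi> t
  proof -
    obtain j where "k = Suc j" using k1 by (cases k) auto
    then show ?thesis using Pcl[of "(P^^j) \<phi>"] by (simp del: funpow.simps add: funpow_Suc_right funpow_swap1)
  qed
  have contr: "dist ((P^^k) \<phi>) ((P^^k) \<psi>) \<le> ((L*Tm)^k / fact k) * dist \<phi> \<psi>" for \<phi> \<psi>
  proof (rule dist_bound)
    fix t
    have "dist (apply_bcontfun ((P^^k) \<phi>) t) (apply_bcontfun ((P^^k) \<psi>) t)
        = norm (apply_bcontfun ((P^^k) \<phi>) (cl t) - apply_bcontfun ((P^^k) \<psi>) (cl t))"
      using Pkcl by (simp add: dist_norm)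
    also have "\<dots> \<le> (L * cl t)^k / fact k * dist \<phi> \<psi>" by (rule est[OF cl_in])
    also have "\<dots> \<le> (L*Tm)^k / fact k * dist \<phi> \<psi>"
      using cl_in[of t] L0 by (intro mult_right_mono divide_right_mono power_mono mult_left_mono) auto
    finally show "dist (apply_bcontfun ((P^^k) \<phi>) t) (apply_bcontfun ((P^^k) \<psi>) t) \<le> (L*Tm)^k / fact k * dist \<phi> \<psi>" .
  qed
  have "\<exists>!x. (P^^k) x = x"
    by (rule banach_fix_type[OF _ k]) (use L0 T0 contr in auto)
  then obtain x where x: "(P^^k) x = x" and xu: "\<And>y. (P^^k) y = y \<Longrightarrow> y = x" by blast
  have "(P^^k) (P x) = P x" using x by (metis funpow_swap1)
  then have Px: "P x = x" using xu by blast
  define \<phi> where "\<phi> = apply_bcontfun x"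
  have phiG: "\<phi> t = G \<phi> t" for t using Papp[of x t] Px by (simp add: \<phi>_def)
  have cphi: "continuous_on UNIV \<phi>" unfolding \<phi>_def by auto
  have phi_int: "\<phi> t = z0 + integral {0..t} (\<lambda>r. f (\<phi> r))" if "t \<in> {0..Tm}" for t
    using phiG[of t] cl_id[OF that] by (simp add: G_def)
  show ?thesis
  proof (intro exI conjI ballI)
    show "\<phi> 0 = z0" using phi_int[of 0] T0 by simp
    show "continuous_on {0..Tm} \<phi>" using cphi by (rule continuous_on_subset) auto
    fix t assume t: "t \<in> {0..Tm}"
    have cf: "continuous_on {0..Tm} (\<lambda>r. f (\<phi> r))"
      by (rule continuous_on_compose2[OF contf[of UNIV] continuous_on_subset[OF cphi]]) auto
    have "((\<lambda>u. z0 + integral {0..u} (\<lambda>r. f (\<phi> r))) has_vector_derivative 0 + f (\<phi> t)) (at t within {0..Tm})"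
      by (intro has_vector_derivative_add has_vector_derivative_const integral_has_vector_derivative[OF cf t])
    then have "((\<lambda>u. z0 + integral {0..u} (\<lambda>r. f (\<phi> r))) has_vector_derivative f (\<phi> t)) (at t within {0..Tm})"
      by simp
    then show "(\<phi> has_vector_derivative f (\<phi> t)) (at t within {0..Tm})"
      by (rule has_vector_derivative_transform[OF t phi_int, rotated])
  qed
qed

lemma mat_sub_ldistrib: "(A::real^'n^'m) ** (B - C) = A ** B - A ** C"
  by (simp add: vec_eq_iff matrix_matrix_mult_def sum_subtractf algebra_simps)

lemma mat_sub_rdistrib: "((B::real^'n^'m) - C) ** A = B ** A - C ** A"
  by (simp add: vec_eq_iff matrix_matrix_mult_def sum_subtractf algebra_simps)

lemma mat3_entry: "((P::real^'n^'n) ** Q ** R) $ i $ j = (\<Sum>k\<in>UNIV. \<Sum>l\<in>UNIV. P $ i $ k * Q $ k $ l * R $ l $ j)"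
  by (simp add: matrix_matrix_mult_def sum_distrib_left sum_distrib_right mult.assoc)
     (rule sum.swap)

lemma posdef_inv:
  fixes A :: "real^'n^'n"
  assumes c: "0 < c" and pd: "\<And>v. c * (norm v)^2 \<le> v \<bullet> (A *v v)"
  shows "A ** matrix_inv A = mat 1" "matrix_inv A ** A = mat 1"
    "\<And>v. c * norm (matrix_inv A *v v) \<le> norm v"
    "\<And>i j. \<bar>matrix_inv A $ i $ j\<bar> \<le> 1/c"
proof -
  have "inj ((*v) A)"
  proof (rule injI)
    fix v w assume "A *v v = A *v w"
    then have "A *v (v - w) = 0" by (simp add: matrix_vector_mult_diff_distrib)
    then have "c * (norm (v - w))^2 \<le> 0" using pd[of "v - w"] by simp
    then have "norm (v - w) = 0" using c by (simp add: mult_le_0_iff)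
    then show "v = w" by simp
  qed
  then have "invertible A" using matrix_left_invertible_injective invertible_left_inverse by blast
  then have inv: "A ** matrix_inv A = mat 1 \<and> matrix_inv A ** A = mat 1"
    unfolding invertible_def matrix_inv_def by (rule someI_ex)
  then show "A ** matrix_inv A = mat 1" "matrix_inv A ** A = mat 1" by auto
  have nb: "c * norm (matrix_inv A *v v) \<le> norm v" for v
  proof -
    define w where "w = matrix_inv A *v v"
    have Aw: "A *v w = v" using inv by (simp add: w_def matrix_vector_mul_assoc)
    have "c * (norm w)^2 \<le> w \<bullet> v" using pd[of w] Aw by simp
    also have "\<dots> \<le> norm w * norm v" by (rule norm_cauchy_schwarz)
    finally have "c * (norm w)^2 \<le> norm w * norm v" .
    then have "norm w * (c * norm w) \<le> norm w * norm v" by (simp add: power2_eq_square algebra_simps)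
    then have "norm w = 0 \<or> c * norm w \<le> norm v"
      by (metis mult_le_cancel_left norm_ge_zero order_le_less)
    then show ?thesis unfolding w_def[symmetric] by auto
  qed
  then show "\<And>v. c * norm (matrix_inv A *v v) \<le> norm v" .
  fix i j
  have "\<bar>matrix_inv A $ i $ j\<bar> = \<bar>(matrix_inv A *v axis j 1) $ i\<bar>"
    by (simp add: matrix_vector_mult_def axis_def if_distrib cong: if_cong)
  also have "\<dots> \<le> norm (matrix_inv A *v axis j 1)" by (rule component_le_norm_cart)
  also have "\<dots> \<le> 1 / c" using nb[of "axis j 1"] c by (simp add: field_simps)
  finally show "\<bar>matrix_inv A $ i $ j\<bar> \<le> 1/c" .
qed

lemma inv_diff:
  fixes A B :: "real^'n^'n"
  assumes "A ** NA = mat 1" "NA ** A = mat 1" "B ** NB = mat 1" "NB ** B = mat 1"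
  shows "NA - NB = NA ** (B - A) ** NB"
proof -
  have "NA ** (B - A) ** NB = NA ** B ** NB - NA ** A ** NB"
    by (simp add: mat_sub_ldistrib mat_sub_rdistrib)
  also have "\<dots> = NA - NB" using assms by (simp add: matrix_mul_assoc[symmetric])
  finally show ?thesis by simp
qed

lemma inv_sym:
  fixes A N :: "real^'n^'n"
  assumes "A ** N = mat 1" "N ** A = mat 1" "transpose A = A"
  shows "transpose N = N"
proof -
  have "transpose N ** A = mat 1"
    using arg_cong[OF assms(1), of transpose] assms(3) by (simp add: matrix_transpose_mul)
  then have "transpose N = transpose N ** (A ** N)" using assms(1) by simp
  also have "\<dots> = N" using \<open>transpose N ** A = mat 1\<close> by (simp add: matrix_mul_assoc)
  finally show ?thesis .
qed

lemma inv_entry_diff: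
  fixes A B :: "real^'n^'n"
  assumes "A ** NA = mat 1" "NA ** A = mat 1" "B ** NB = mat 1" "NB ** B = mat 1"
    and bA: "\<And>i j. \<bar>NA $ i $ j\<bar> \<le> K" and bB: "\<And>i j. \<bar>NB $ i $ j\<bar> \<le> K"
  shows "\<bar>NA $ i $ j - NB $ i $ j\<bar> \<le> K * K * (\<Sum>k\<in>UNIV. \<Sum>l\<in>UNIV. \<bar>B $ k $ l - A $ k $ l\<bar>)"
proof -
  have "NA $ i $ j - NB $ i $ j = (NA ** (B - A) ** NB) $ i $ j"
    using inv_diff[OF assms(1-4)] by (metis vector_minus_component)
  also have "\<dots> = (\<Sum>k\<in>UNIV. \<Sum>l\<in>UNIV. NA $ i $ k * (B - A) $ k $ l * NB $ l $ j)" by (rule mat3_entry)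
  finally have eq: "NA $ i $ j - NB $ i $ j = (\<Sum>k\<in>UNIV. \<Sum>l\<in>UNIV. NA $ i $ k * (B $ k $ l - A $ k $ l) * NB $ l $ j)"
    by simp
  have "\<bar>NA $ i $ j - NB $ i $ j\<bar> \<le> (\<Sum>k\<in>UNIV. \<Sum>l\<in>UNIV. \<bar>NA $ i $ k * (B $ k $ l - A $ k $ l) * NB $ l $ j\<bar>)"
    unfolding eq by (rule order_trans[OF sum_abs sum_mono[OF sum_abs]])
  also have "\<dots> \<le> (\<Sum>k\<in>UNIV. \<Sum>l\<in>UNIV. K * K * \<bar>B $ k $ l - A $ k $ l\<bar>)"
  proof (intro sum_mono)
    fix k l
    have "\<bar>NA $ i $ k * (B $ k $ l - A $ k $ l) * NB $ l $ j\<bar> = \<bar>NA $ i $ k\<bar> * \<bar>NB $ l $ j\<bar> * \<bar>B $ k $ l - A $ k $ l\<bar>"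
      by (simp add: abs_mult)
    also have "\<dots> \<le> K * K * \<bar>B $ k $ l - A $ k $ l\<bar>"
      by (intro mult_right_mono mult_mono bA bB) (auto intro: order_trans[OF abs_ge_zero bA])
    finally show "\<bar>NA $ i $ k * (B $ k $ l - A $ k $ l) * NB $ l $ j\<bar> \<le> K * K * \<bar>B $ k $ l - A $ k $ l\<bar>" .
  qed
  also have "\<dots> = K * K * (\<Sum>k\<in>UNIV. \<Sum>l\<in>UNIV. \<bar>B $ k $ l - A $ k $ l\<bar>)"
    by (simp add: sum_distrib_left)
  finally show ?thesis .
qed


lemma ev_in_within: "eventually (\<lambda>w. w \<in> S) (at z within S)"
  by (simp add: eventually_at_filter)

lemma cara:
  fixes g \<phi> :: "'b::real_normed_vector \<Rightarrow> real"
  assumes p0: "\<phi> z = 0" and dphi: "(\<phi> has_derivative \<phi>') (at z within S)"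
    and cg: "continuous (at z within S) g"
  shows "((\<lambda>w. g w * \<phi> w) has_derivative (\<lambda>d. g z * \<phi>' d)) (at z within S)"
proof -
  have bl: "bounded_linear \<phi>'" using dphi by (rule has_derivative_bounded_linear)
  obtain K where K: "\<And>d. norm (\<phi>' d) \<le> norm d * K" and K0: "K > 0"
    using bounded_linear.pos_bounded[OF bl] by blast
  have lim1: "((\<lambda>y. (1 / norm (y - z)) *\<^sub>R (\<phi> y - (\<phi> z + \<phi>' (y - z)))) \<longlongrightarrow> 0) (at z within S)"
    using dphi unfolding has_derivative_within by blast
  have gl: "((\<lambda>w. g w - g z) \<longlongrightarrow> 0) (at z within S)"
    using cg unfolding continuous_within by (simp add: LIM_zero)
  define R where "R w = \<bar>g w - g z\<bar> * (norm ((1 / norm (w - z)) *\<^sub>R (\<phi> w - (\<phi> z + \<phi>' (w - z)))) + K)" for w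
  have Rl: "(R \<longlongrightarrow> 0) (at z within S)"
  proof -
    have "(R \<longlongrightarrow> \<bar>0\<bar> * (norm (0::real) + K)) (at z within S)"
      unfolding R_def by (intro tendsto_intros gl lim1)
    then show ?thesis by simp
  qed
  have d2: "((\<lambda>w. (g w - g z) * \<phi> w) has_derivative (\<lambda>d. 0)) (at z within S)"
    unfolding has_derivative_within
  proof (intro conjI)
    show "bounded_linear (\<lambda>d. 0::real)" by (rule bounded_linear_zero)
    show "((\<lambda>y. (1 / norm (y - z)) *\<^sub>R ((g y - g z) * \<phi> y - ((g z - g z) * \<phi> z + 0))) \<longlongrightarrow> 0) (at z within S)"
    proof (rule Lim_null_comparison[OF _ Rl], rule always_eventually, rule allI)
      fix w
      show "norm ((1 / norm (w - z)) *\<^sub>R ((g w - g z) * \<phi> w - ((g z - g z) * \<phi> z + 0))) \<le> R w"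
      proof (cases "w = z")
        case True then show ?thesis by (simp add: R_def p0)
      next
        case False
        then have nz: "norm (w - z) > 0" by simp
        have "\<bar>\<phi> w\<bar> / norm (w - z) \<le> norm ((1 / norm (w - z)) *\<^sub>R (\<phi> w - (\<phi> z + \<phi>' (w - z)))) + K"
        proof -
          have "\<bar>\<phi> w\<bar> \<le> \<bar>\<phi> w - \<phi>' (w - z)\<bar> + \<bar>\<phi>' (w - z)\<bar>" by linarith
          also have "\<dots> \<le> \<bar>\<phi> w - \<phi>' (w - z)\<bar> + norm (w - z) * K" using K[of "w - z"] by simp
          finally have "\<bar>\<phi> w\<bar> / norm (w - z) \<le> (\<bar>\<phi> w - \<phi>' (w - z)\<bar> + norm (w - z) * K) / norm (w - z)"
            using nz by (simp add: divide_right_mono)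
          also have "\<dots> = \<bar>\<phi> w - \<phi>' (w - z)\<bar> / norm (w - z) + K" using nz by (simp add: field_simps)
          also have "\<bar>\<phi> w - \<phi>' (w - z)\<bar> / norm (w - z) = norm ((1 / norm (w - z)) *\<^sub>R (\<phi> w - (\<phi> z + \<phi>' (w - z))))"
            using nz by (simp add: p0)
          finally show ?thesis .
        qed
        then have "\<bar>g w - g z\<bar> * (\<bar>\<phi> w\<bar> / norm (w - z)) \<le> R w"
          unfolding R_def by (rule mult_left_mono) simp
        then show ?thesis using nz by (simp add: p0 abs_mult)
      qed
    qed
  qed
  have d1: "((\<lambda>w. g z * \<phi> w) has_derivative (\<lambda>d. g z * \<phi>' d)) (at z within S)"
    by (rule has_derivative_mult_right[OF dphi])
  have "((\<lambda>w. g z * \<phi> w + (g w - g z) * \<phi> w) has_derivative (\<lambda>d. g z * \<phi>' d + 0)) (at z within S)"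
    by (rule has_derivative_add[OF d1 d2])
  then show ?thesis by (simp add: algebra_simps)
qed

lemma inv_deriv:
  fixes A :: "'b::real_normed_vector \<Rightarrow> real^'n^'n"
  assumes c: "0 < c" and pd: "\<And>w v. w \<in> S \<Longrightarrow> c * (norm v)^2 \<le> v \<bullet> (A w *v v)"
    and z: "z \<in> S" and dA: "\<And>k l. ((\<lambda>w. A w $ k $ l) has_derivative A' k l) (at z within S)"
  shows "((\<lambda>w. matrix_inv (A w) $ i $ j) has_derivative
          (\<lambda>d. - (\<Sum>k\<in>UNIV. \<Sum>l\<in>UNIV. matrix_inv (A z) $ i $ k * A' k l d * matrix_inv (A z) $ l $ j))) (at z within S)"
proof -
  define N where "N w = matrix_inv (A w)" for w
  have NI: "A w ** N w = mat 1" "N w ** A w = mat 1" "\<bar>N w $ a $ b\<bar> \<le> 1/c" if "w \<in> S" for w a b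
    using posdef_inv[OF c pd[OF that]] unfolding N_def by auto
  have cA: "continuous (at z within S) (\<lambda>w. A w $ k $ l)" for k l
    by (rule has_derivative_continuous[OF dA])
  have cN: "continuous (at z within S) (\<lambda>w. N w $ a $ b)" for a b
  proof -
    define R where "R w = 1/c * (1/c) * (\<Sum>k\<in>UNIV. \<Sum>l\<in>UNIV. \<bar>A z $ k $ l - A w $ k $ l\<bar>)" for w
    have t1: "((\<lambda>w. \<bar>A z $ k $ l - A w $ k $ l\<bar>) \<longlongrightarrow> 0) (at z within S)" for k l
    proof -
      have "((\<lambda>w. \<bar>A z $ k $ l - A w $ k $ l\<bar>) \<longlongrightarrow> \<bar>A z $ k $ l - A z $ k $ l\<bar>) (at z within S)"
        using cA[of k l] unfolding continuous_within by (intro tendsto_rabs tendsto_diff tendsto_const)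
      then show ?thesis by simp
    qed
    have "((\<lambda>w. (\<Sum>k\<in>UNIV. \<Sum>l\<in>UNIV. \<bar>A z $ k $ l - A w $ k $ l\<bar>)) \<longlongrightarrow> (\<Sum>k\<in>(UNIV::'n set). \<Sum>l\<in>(UNIV::'n set). 0)) (at z within S)"
      by (intro tendsto_sum t1)
    then have "(R \<longlongrightarrow> 1/c * (1/c) * 0) (at z within S)"
      unfolding R_def by (intro tendsto_mult_left) simp
    then have Rl: "(R \<longlongrightarrow> 0) (at z within S)" by simp
    have "((\<lambda>w. N w $ a $ b - N z $ a $ b) \<longlongrightarrow> 0) (at z within S)"
    proof (rule Lim_null_comparison[OF _ Rl])
      show "\<forall>\<^sub>F x in at z within S. norm (N x $ a $ b - N z $ a $ b) \<le> R x"
        using ev_in_within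
      proof (rule eventually_mono)
        fix w assume w: "w \<in> S"
        show "norm (N w $ a $ b - N z $ a $ b) \<le> R w"
          unfolding R_def real_norm_def
          by (rule inv_entry_diff[OF NI(1,2)[OF w] NI(1,2)[OF z] NI(3)[OF w] NI(3)[OF z]])
      qed
    qed
    then show ?thesis unfolding continuous_within by (simp add: LIM_zero_iff)
  qed
  have ident: "N w $ i $ j = N z $ i $ j + (\<Sum>k\<in>UNIV. \<Sum>l\<in>UNIV. (- (N w $ i $ k * N z $ l $ j)) * (A w $ k $ l - A z $ k $ l))"
    if w: "w \<in> S" for w
  proof -
    have "N w $ i $ j - N z $ i $ j = (N w ** (A z - A w) ** N z) $ i $ j"
      using inv_diff[OF NI(1,2)[OF w] NI(1,2)[OF z]] by (metis vector_minus_component)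
    also have "\<dots> = (\<Sum>k\<in>UNIV. \<Sum>l\<in>UNIV. N w $ i $ k * (A z - A w) $ k $ l * N z $ l $ j)" by (rule mat3_entry)
    also have "\<dots> = (\<Sum>k\<in>UNIV. \<Sum>l\<in>UNIV. (- (N w $ i $ k * N z $ l $ j)) * (A w $ k $ l - A z $ k $ l))"
      by (intro sum.cong refl) (simp add: algebra_simps)
    finally show ?thesis by simp
  qed
  have D: "((\<lambda>w. N z $ i $ j + (\<Sum>k\<in>UNIV. \<Sum>l\<in>UNIV. (- (N w $ i $ k * N z $ l $ j)) * (A w $ k $ l - A z $ k $ l)))
        has_derivative (\<lambda>d. 0 + (\<Sum>k\<in>UNIV. \<Sum>l\<in>UNIV. (- (N z $ i $ k * N z $ l $ j)) * A' k l d))) (at z within S)"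
  proof (intro has_derivative_add has_derivative_const has_derivative_sum)
    fix k l
    show "((\<lambda>w. (- (N w $ i $ k * N z $ l $ j)) * (A w $ k $ l - A z $ k $ l)) has_derivative
          (\<lambda>d. (- (N z $ i $ k * N z $ l $ j)) * A' k l d)) (at z within S)"
    proof -
      have p: "((\<lambda>w. A w $ k $ l - A z $ k $ l) has_derivative A' k l) (at z within S)"
        using has_derivative_diff[OF dA[of k l] has_derivative_const[of "A z $ k $ l"]] by simp
      have q: "continuous (at z within S) (\<lambda>w. - (N w $ i $ k * N z $ l $ j))"
        by (intro continuous_intros cN)
      have r: "(\<lambda>w. A w $ k $ l - A z $ k $ l) z = 0" by simp
      show ?thesis using cara[OF r p q] by simp
    qed
  qed
  have D2: "((\<lambda>w. N w $ i $ j) has_derivative (\<lambda>d. 0 + (\<Sum>k\<in>UNIV. \<Sum>l\<in>UNIV. (- (N z $ i $ k * N z $ l $ j)) * A' k l d))) (at z within S)"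
    by (rule has_derivative_transform[OF z ident D]) 
  have eqd: "(\<lambda>d. 0 + (\<Sum>k\<in>UNIV. \<Sum>l\<in>UNIV. (- (N z $ i $ k * N z $ l $ j)) * A' k l d))
      = (\<lambda>d. - (\<Sum>k\<in>UNIV. \<Sum>l\<in>UNIV. N z $ i $ k * A' k l d * N z $ l $ j))"
    by (simp add: fun_eq_iff sum_negf[symmetric] algebra_simps)
  have D3: "((\<lambda>w. N w $ i $ j) has_derivative (\<lambda>d. - (\<Sum>k\<in>UNIV. \<Sum>l\<in>UNIV. N z $ i $ k * A' k l d * N z $ l $ j))) (at z within S)"
    using D2 by (subst eqd[symmetric])
  then show ?thesis by (simp only: N_def)
qed

definition BL :: "('a::real_normed_vector \<Rightarrow> real) \<Rightarrow> bool" where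
  "BL f \<longleftrightarrow> (\<exists>B K. \<forall>z z'. \<bar>f z\<bar> \<le> B \<and> \<bar>f z - f z'\<bar> \<le> K * norm (z - z'))"

definition LIP :: "('a::real_normed_vector \<Rightarrow> 'b::real_normed_vector) \<Rightarrow> bool" where
  "LIP f \<longleftrightarrow> (\<exists>K. \<forall>z z'. norm (f z - f z') \<le> K * norm (z - z'))"

lemma BLI: "(\<And>z. \<bar>f z\<bar> \<le> B) \<Longrightarrow> (\<And>z z'. \<bar>f z - f z'\<bar> \<le> K * norm (z - z')) \<Longrightarrow> BL f"
  unfolding BL_def by blast

lemma BLE: assumes "BL f" obtains B K where "\<And>z. \<bar>f z\<bar> \<le> B" "\<And>z z'. \<bar>f z - f z'\<bar> \<le> K * norm (z - z')" "0 \<le> B" "0 \<le> K"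
proof -
  obtain B K where a: "\<And>z. \<bar>f z\<bar> \<le> B" "\<And>z z'. \<bar>f z - f z'\<bar> \<le> K * norm (z - z')"
    using assms unfolding BL_def by blast
  have "0 \<le> B" using a(1)[of 0] by linarith
  moreover have "\<bar>f z - f z'\<bar> \<le> max K 0 * norm (z - z')" for z z'
    using a(2)[of z z'] mult_right_mono[OF max.cobounded1[of K 0] norm_ge_zero[of "z - z'"]] by linarith
  ultimately show ?thesis using that a(1) by fastforce
qed

lemma LIPI: "(\<And>z z'. norm (f z - f z') \<le> K * norm (z - z')) \<Longrightarrow> LIP f"
  unfolding LIP_def by blast

lemma LIPE: assumes "LIP f" obtains K where "\<And>z z'. norm (f z - f z') \<le> K * norm (z - z')" "0 \<le> K"
proof -
  obtain K where a: "\<And>z z'. norm (f z - f z') \<le> K * norm (z - z')"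
    using assms unfolding LIP_def by blast
  have "norm (f z - f z') \<le> max K 0 * norm (z - z')" for z z'
    using a[of z z'] mult_right_mono[OF max.cobounded1[of K 0] norm_ge_zero[of "z - z'"]] by linarith
  then show ?thesis using that by fastforce
qed

lemma BL_const: "BL (\<lambda>z. c)"
  by (rule BLI[of _ "\<bar>c\<bar>" 0]) auto

lemma BL_add: assumes "BL f" "BL g" shows "BL (\<lambda>z. f z + g z)"
proof -
  obtain B1 K1 where 1: "\<And>z. \<bar>f z\<bar> \<le> B1" "\<And>z z'. \<bar>f z - f z'\<bar> \<le> K1 * norm (z - z')" "0 \<le> B1" "0 \<le> K1"
    by (metis BLE[OF assms(1)])
  obtain B2 K2 where 2: "\<And>z. \<bar>g z\<bar> \<le> B2" "\<And>z z'. \<bar>g z - g z'\<bar> \<le> K2 * norm (z - z')" "0 \<le> B2" "0 \<le> K2"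
    by (metis BLE[OF assms(2)])
  show ?thesis
  proof (rule BLI[of _ "B1 + B2" "K1 + K2"])
    fix z z'
    show "\<bar>f z + g z\<bar> \<le> B1 + B2" using 1(1)[of z] 2(1)[of z] by linarith
    have e: "f z + g z - (f z' + g z') = (f z - f z') + (g z - g z')" by simp
    have "\<bar>(f z - f z') + (g z - g z')\<bar> \<le> \<bar>f z - f z'\<bar> + \<bar>g z - g z'\<bar>" by (rule abs_triangle_ineq)
    also have "\<dots> \<le> K1 * norm (z - z') + K2 * norm (z - z')" by (intro add_mono 1(2) 2(2))
    finally show "\<bar>f z + g z - (f z' + g z')\<bar> \<le> (K1 + K2) * norm (z - z')" unfolding e by (simp only: distrib_right)
  qed
qed

lemma BL_minus: assumes "BL f" shows "BL (\<lambda>z. - f z)"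
proof -
  obtain B1 K1 where 1: "\<And>z. \<bar>f z\<bar> \<le> B1" "\<And>z z'. \<bar>f z - f z'\<bar> \<le> K1 * norm (z - z')" "0 \<le> B1" "0 \<le> K1"
    by (metis BLE[OF assms(1)])
  show ?thesis
  proof (rule BLI[of _ "B1" "K1"])
    fix z z'
    show "\<bar>- f z\<bar> \<le> B1" using 1(1)[of z] by simp
    have "\<bar>- f z - - f z'\<bar> = \<bar>f z - f z'\<bar>" by simp
    then show "\<bar>- f z - - f z'\<bar> \<le> K1 * norm (z - z')" using 1(2)[of z z'] by simp
  qed
qed

lemma BL_mult: assumes "BL f" "BL g" shows "BL (\<lambda>z. f z * g z)"
proof -
  obtain B1 K1 where 1: "\<And>z. \<bar>f z\<bar> \<le> B1" "\<And>z z'. \<bar>f z - f z'\<bar> \<le> K1 * norm (z - z')" "0 \<le> B1" "0 \<le> K1"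
    by (metis BLE[OF assms(1)])
  obtain B2 K2 where 2: "\<And>z. \<bar>g z\<bar> \<le> B2" "\<And>z z'. \<bar>g z - g z'\<bar> \<le> K2 * norm (z - z')" "0 \<le> B2" "0 \<le> K2"
    by (metis BLE[OF assms(2)])
  show ?thesis
  proof (rule BLI[of _ "B1 * B2" "B1 * K2 + B2 * K1"])
    fix z z'
    show "\<bar>f z * g z\<bar> \<le> B1 * B2" unfolding abs_mult by (intro mult_mono 1 2) auto
    have "f z * g z - f z' * g z' = f z * (g z - g z') + g z' * (f z - f z')" by (simp add: algebra_simps)
    moreover have "\<bar>f z * (g z - g z') + g z' * (f z - f z')\<bar> \<le> \<bar>f z * (g z - g z')\<bar> + \<bar>g z' * (f z - f z')\<bar>"
      by (rule abs_triangle_ineq)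
    ultimately have "\<bar>f z * g z - f z' * g z'\<bar> \<le> \<bar>f z\<bar> * \<bar>g z - g z'\<bar> + \<bar>g z'\<bar> * \<bar>f z - f z'\<bar>"
      by (simp only: abs_mult)
    also have "\<dots> \<le> B1 * (K2 * norm (z - z')) + B2 * (K1 * norm (z - z'))"
      by (intro add_mono mult_mono 1 2) auto
    finally show "\<bar>f z * g z - f z' * g z'\<bar> \<le> (B1 * K2 + B2 * K1) * norm (z - z')" by (simp add: algebra_simps)
  qed
qed

lemma BL_sum: assumes "\<And>i. i \<in> I \<Longrightarrow> BL (f i)" shows "BL (\<lambda>z. \<Sum>i\<in>I. f i z)"
  using assms
proof (induction I rule: infinite_finite_induct)
  case (infinite A) then show ?case by (simp add: BL_const)
next
  case empty then show ?case by (simp add: BL_const)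
next
  case (insert x F)
  then show ?case by (simp add: BL_add)
qed

lemma BL_compose: assumes "BL f" "\<And>z z'. norm (g z - g z') \<le> L * norm (z - z')" shows "BL (\<lambda>z. f (g z))"
proof -
  obtain B1 K1 where 1: "\<And>z. \<bar>f z\<bar> \<le> B1" "\<And>z z'. \<bar>f z - f z'\<bar> \<le> K1 * norm (z - z')" "0 \<le> B1" "0 \<le> K1"
    by (metis BLE[OF assms(1)])
  show ?thesis
  proof (rule BLI[of _ "B1" "K1 * L"])
    fix z z'
    show "\<bar>f (g z)\<bar> \<le> B1" by (rule 1)
    have "\<bar>f (g z) - f (g z')\<bar> \<le> K1 * norm (g z - g z')" by (rule 1)
    also have "\<dots> \<le> K1 * (L * norm (z - z'))" by (intro mult_left_mono assms(2) 1)
    finally show "\<bar>f (g z) - f (g z')\<bar> \<le> K1 * L * norm (z - z')" by simp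
  qed
qed

lemma BL_LIP: "BL f \<Longrightarrow> LIP f"
  unfolding BL_def LIP_def real_norm_def by blast

lemma LIP_pair: assumes "LIP f" "LIP g" shows "LIP (\<lambda>z. (f z, g z))"
proof -
  obtain K1 where 1: "\<And>z z'. norm (f z - f z') \<le> K1 * norm (z - z')" "0 \<le> K1" by (metis LIPE[OF assms(1)])
  obtain K2 where 2: "\<And>z z'. norm (g z - g z') \<le> K2 * norm (z - z')" "0 \<le> K2" by (metis LIPE[OF assms(2)])
  show ?thesis
  proof (rule LIPI[of _ "K1 + K2"])
    fix z z'
    have "norm (f z - f z', g z - g z') \<le> norm (f z - f z') + norm (g z - g z')"
      by (rule norm_Pair_le)
    then have "norm ((f z, g z) - (f z', g z')) \<le> norm (f z - f z') + norm (g z - g z')"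
      by simp
    also have "\<dots> \<le> (K1 + K2) * norm (z - z')" using 1(1)[of z z'] 2(1)[of z z'] by (simp add: algebra_simps)
    finally show "norm ((f z, g z) - (f z', g z')) \<le> (K1 + K2) * norm (z - z')" .
  qed
qed

lemma LIP_vec: assumes "\<And>i. LIP (f i)" shows "LIP (\<lambda>z. \<chi> i. (f i z :: real))"
proof -
  have "\<forall>i. \<exists>K. \<forall>z z'. norm (f i z - f i z') \<le> K * norm (z - z')" using assms unfolding LIP_def by blast
  then obtain K where K: "\<And>i z z'. norm (f i z - f i z') \<le> K i * norm (z - z')" by metis
  show ?thesis
  proof (rule LIPI[of _ "\<Sum>i\<in>UNIV. K i"])
    fix z z'
    have "norm ((\<chi> i. f i z) - (\<chi> i. f i z')) \<le> (\<Sum>i\<in>UNIV. \<bar>((\<chi> i. f i z) - (\<chi> i. f i z')) $ i\<bar>)"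
      by (rule norm_le_l1_cart)
    also have "\<dots> \<le> (\<Sum>i\<in>UNIV. K i * norm (z - z'))"
      by (intro sum_mono) (use K in auto)
    also have "\<dots> = (\<Sum>i\<in>UNIV. K i) * norm (z - z')" by (simp add: sum_distrib_right)
    finally show "norm ((\<chi> i. f i z) - (\<chi> i. f i z')) \<le> (\<Sum>i\<in>UNIV. K i) * norm (z - z')" .
  qed
qed

lemma LIP_scale: assumes "BL a" "\<And>i. BL (f i)" shows "LIP (\<lambda>z. a z *\<^sub>R (\<chi> i. (f i z :: real)))"
proof -
  have "(\<lambda>z. a z *\<^sub>R (\<chi> i. (f i z :: real))) = (\<lambda>z. \<chi> i. a z * f i z)" by (simp add: vec_eq_iff fun_eq_iff)
  moreover have "LIP (\<lambda>z. \<chi> i. a z * f i z)"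
    by (rule LIP_vec, rule BL_LIP, rule BL_mult[OF assms(1) assms(2)])
  ultimately show ?thesis by simp
qed

lemma LIP_fst: "LIP fst"
proof (rule LIPI[of _ 1])
  fix z z' :: "'a::real_normed_vector \<times> 'b::real_normed_vector"
  have "norm (fst (z - z')) \<le> norm (z - z')"
    using norm_fst_le[of "fst (z - z')" "snd (z - z')"] unfolding prod.collapse .
  then show "norm (fst z - fst z') \<le> 1 * norm (z - z')" by simp
qed

lemma LIP_snd: "LIP snd"
proof (rule LIPI[of _ 1])
  fix z z' :: "'a::real_normed_vector \<times> 'b::real_normed_vector"
  have "norm (snd (z - z')) \<le> norm (z - z')"
    using norm_snd_le[of "snd (z - z')" "fst (z - z')"] unfolding prod.collapse .
  then show "norm (snd z - snd z') \<le> 1 * norm (z - z')" by simp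
qed

lemma LIP_comp: assumes "LIP f" "LIP g" shows "LIP (\<lambda>z. f (g z))"
proof -
  obtain K1 where 1: "\<And>z z'. norm (f z - f z') \<le> K1 * norm (z - z')" "0 \<le> K1" by (metis LIPE[OF assms(1)])
  obtain K2 where 2: "\<And>z z'. norm (g z - g z') \<le> K2 * norm (z - z')" "0 \<le> K2" by (metis LIPE[OF assms(2)])
  show ?thesis
  proof (rule LIPI[of _ "K1 * K2"])
    fix z z'
    have "norm (f (g z) - f (g z')) \<le> K1 * norm (g z - g z')" by (rule 1)
    also have "\<dots> \<le> K1 * (K2 * norm (z - z'))" by (intro mult_left_mono 2 1)
    finally show "norm (f (g z) - f (g z')) \<le> K1 * K2 * norm (z - z')" by simp
  qed
qed

lemma BL_compose_LIP: assumes "BL f" "LIP g" shows "BL (\<lambda>z. f (g z))"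
  using assms(2) BL_compose[OF assms(1)] unfolding LIP_def by blast

lemma clamp_lip: "\<bar>max a (min b x) - max a (min b y)\<bar> \<le> \<bar>x - (y::real)\<bar>"
  by (auto simp: max_def min_def abs_if)

lemma BL_clamp: assumes "LIP (g::'a::real_normed_vector \<Rightarrow> real)" "a \<le> b" shows "BL (\<lambda>z. max a (min b (g z)))"
proof -
  obtain K where K: "\<And>z z'. norm (g z - g z') \<le> K * norm (z - z')" "0 \<le> K" by (metis LIPE[OF assms(1)])
  show ?thesis
  proof (rule BLI[of _ "\<bar>a\<bar> + \<bar>b\<bar>" K])
    fix z z'
    show "\<bar>max a (min b (g z))\<bar> \<le> \<bar>a\<bar> + \<bar>b\<bar>" using assms(2) by (simp add: max_def min_def abs_if)
    show "\<bar>max a (min b (g z)) - max a (min b (g z'))\<bar> \<le> K * norm (z - z')"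
      using clamp_lip[of a b "g z" "g z'"] K(1)[of z z'] by simp
  qed
qed

definition Bd :: "('a::real_normed_vector \<Rightarrow> real) \<Rightarrow> real" where
  "Bd f = (SOME B. \<forall>z. \<bar>f z\<bar> \<le> B)"
definition Lp :: "('a::real_normed_vector \<Rightarrow> real) \<Rightarrow> real" where
  "Lp f = (SOME K. \<forall>z z'. \<bar>f z - f z'\<bar> \<le> K * norm (z - z'))"

lemma Bd: assumes "BL f" shows "\<bar>f z\<bar> \<le> Bd f"
proof -
  have "\<exists>B. \<forall>z. \<bar>f z\<bar> \<le> B" using assms unfolding BL_def by blast
  then have "\<forall>z. \<bar>f z\<bar> \<le> Bd f" unfolding Bd_def by (rule someI_ex)
  then show ?thesis by blast
qed

lemma Lp: assumes "BL f" shows "\<bar>f z - f z'\<bar> \<le> Lp f * norm (z - z')"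
proof -
  have "\<exists>K. \<forall>z z'. \<bar>f z - f z'\<bar> \<le> K * norm (z - z')" using assms unfolding BL_def by blast
  then have "\<forall>z z'. \<bar>f z - f z'\<bar> \<le> Lp f * norm (z - z')" unfolding Lp_def by (rule someI_ex)
  then show ?thesis by blast
qed

lemma Bd_nonneg: "BL f \<Longrightarrow> 0 \<le> Bd f"
  using Bd[of f 0] by linarith

lemma Lp_abs: "BL f \<Longrightarrow> \<bar>f z - f z'\<bar> \<le> \<bar>Lp f\<bar> * norm (z - z')"
  using Lp[of f z z'] mult_right_mono[OF abs_ge_self[of "Lp f"] norm_ge_zero[of "z - z'"]] by linarith

locale gg =
  fixes h :: "real \<Rightarrow> real^'n \<Rightarrow> real^'n^'n" and x0 c :: real
    and Fh :: "'n \<Rightarrow> 'n \<Rightarrow> (real \<times> (real^'n)) list \<Rightarrow> real \<times> (real^'n) \<Rightarrow> real"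
  assumes x0: "0 < x0" and c: "0 < c"
    and sym: "\<And>x y. x \<in> {0..x0} \<Longrightarrow> transpose (h x y) = h x y"
    and pd: "\<And>x y v. x \<in> {0..x0} \<Longrightarrow> c * (norm v)^2 \<le> v \<bullet> (h x y *v v)"
    and F0: "\<And>i j x y. x \<in> {0..x0} \<Longrightarrow> Fh i j [] (x, y) = h x y $ i $ j"
    and Fd: "\<And>i j vs z. z \<in> {0..x0} \<times> UNIV \<Longrightarrow>
               (Fh i j vs has_derivative (\<lambda>w. Fh i j (w # vs) z)) (at z within {0..x0} \<times> UNIV)"
    and Fb: "\<And>i j vs. \<exists>B. \<forall>z\<in>{0..x0} \<times> UNIV. \<bar>Fh i j vs z\<bar> \<le> B * prod_list (map norm vs)"
begin

abbreviation "SS \<equiv> ({0..x0} \<times> UNIV :: (real \<times> (real^'n)) set)"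

lemma convex_SS: "convex SS"
  by (intro convex_Times convex_real_interval convex_UNIV)

lemma Fbf: "\<exists>Bf. \<forall>i j vs. \<forall>z\<in>SS. \<bar>Fh i j vs z\<bar> \<le> Bf i j vs * prod_list (map norm vs)"
proof -
  have "\<forall>i j vs. \<exists>B. \<forall>z\<in>SS. \<bar>Fh i j vs z\<bar> \<le> B * prod_list (map norm vs)" using Fb by blast
  then show ?thesis by metis
qed

lemma Flin: "z \<in> SS \<Longrightarrow> linear (\<lambda>w. Fh i j (w # vs) z)"
  using Fd[of z i j vs] by (simp add: has_derivative_linear)

lemma Fder_bound: "\<exists>M. \<forall>z\<in>SS. \<forall>w. \<bar>Fh i j (w # vs) z\<bar> \<le> M * norm w"
proof -
  obtain Bf where Bf0: "\<forall>i j vs. \<forall>z\<in>SS. \<bar>Fh i j vs z\<bar> \<le> Bf i j vs * prod_list (map norm vs)"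
    using Fbf by blast
  have Bf: "\<And>i j vs z. z \<in> SS \<Longrightarrow> \<bar>Fh i j vs z\<bar> \<le> Bf i j vs * prod_list (map norm vs)"
    using Bf0 by blast
  define M where "M = (\<Sum>b\<in>Basis. \<bar>Bf i j (b # vs) * prod_list (map norm vs)\<bar>)"
  show ?thesis
  proof (intro exI[of _ M] ballI allI)
    fix z w assume z: "z \<in> SS"
    have "Fh i j (w # vs) z = (\<lambda>w. Fh i j (w # vs) z) w \<bullet> 1" by simp
    also have "\<dots> = (\<Sum>b\<in>Basis. (w \<bullet> b) * ((\<lambda>w. Fh i j (w # vs) z) b \<bullet> 1))"
      by (rule Linear_Algebra.linear_componentwise[OF Flin[OF z]])
    finally have e: "Fh i j (w # vs) z = (\<Sum>b\<in>Basis. (w \<bullet> b) * Fh i j (b # vs) z)" by simp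
    have "\<bar>Fh i j (w # vs) z\<bar> \<le> (\<Sum>b\<in>Basis. \<bar>(w \<bullet> b) * Fh i j (b # vs) z\<bar>)"
      unfolding e by (rule sum_abs)
    also have "\<dots> \<le> (\<Sum>b\<in>Basis. norm w * \<bar>Bf i j (b # vs) * prod_list (map norm vs)\<bar>)"
    proof (rule sum_mono)
      fix b :: "real \<times> (real^'n)" assume b: "b \<in> Basis"
      have "\<bar>w \<bullet> b\<bar> \<le> norm w" using b by (simp add: Basis_le_norm)
      moreover have "\<bar>Fh i j (b # vs) z\<bar> \<le> \<bar>Bf i j (b # vs) * prod_list (map norm vs)\<bar>"
        using Bf[OF z, of i j "b # vs"] b by simp
      ultimately show "\<bar>(w \<bullet> b) * Fh i j (b # vs) z\<bar> \<le> norm w * \<bar>Bf i j (b # vs) * prod_list (map norm vs)\<bar>"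
        unfolding abs_mult by (intro mult_mono) auto
    qed
    also have "\<dots> = M * norm w" by (simp add: M_def sum_distrib_left mult.commute)
    finally show "\<bar>Fh i j (w # vs) z\<bar> \<le> M * norm w" .
  qed
qed

lemma Flip: "\<exists>K. \<forall>a\<in>SS. \<forall>b\<in>SS. \<bar>Fh i j vs a - Fh i j vs b\<bar> \<le> K * norm (a - b)"
proof -
  obtain M where M: "\<And>z w. z \<in> SS \<Longrightarrow> \<bar>Fh i j (w # vs) z\<bar> \<le> M * norm w"
    using Fder_bound[of i j vs] by blast
  have H: "norm (Fh i j vs a - Fh i j vs b) \<le> M * norm (a - b)" if "a \<in> SS" "b \<in> SS" for a b
  proof (rule differentiable_bound[OF convex_SS Fd _ that])
    fix z assume z: "z \<in> SS"
    show "onorm (\<lambda>w. Fh i j (w # vs) z) \<le> M"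
      by (rule onorm_le) (use M[OF z] in simp)
  qed
  show ?thesis
  proof (intro exI[of _ M] ballI)
    fix a b assume "a \<in> SS" "b \<in> SS"
    from H[OF this] show "\<bar>Fh i j vs a - Fh i j vs b\<bar> \<le> M * norm (a - b)" by simp
  qed
qed

lemma Fbound: "\<exists>B. \<forall>z\<in>SS. \<bar>Fh i j vs z\<bar> \<le> B"
proof -
  obtain B where "\<forall>z\<in>SS. \<bar>Fh i j vs z\<bar> \<le> B * prod_list (map norm vs)" using Fb by blast
  then show ?thesis by blast
qed

lemma hder: "z \<in> SS \<Longrightarrow> ((\<lambda>z. h (fst z) (snd z) $ i $ j) has_derivative (\<lambda>w. Fh i j [w] z)) (at z within SS)"
  by (rule has_derivative_transform[OF _ _ Fd[of z i j "[]"]]) (auto simp: F0 mem_Times_iff)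

lemma Flin2: assumes "z \<in> SS"
  shows "Fh i j [(a, v)] z = a * Fh i j [(1,0)] z + (\<Sum>m\<in>UNIV. v $ m * Fh i j [(0, axis m 1)] z)"
proof -
  interpret L: linear "\<lambda>w. Fh i j [w] z" using Flin[OF assms, of i j "[]"] .
  have "(a, v) = a *\<^sub>R (1, 0) + (\<Sum>m\<in>UNIV. (v $ m) *\<^sub>R (0, axis m 1))"
  proof -
    have "(\<Sum>m\<in>UNIV. (v $ m) *\<^sub>R ((0::real), axis m (1::real))) = (0, \<Sum>m\<in>UNIV. (v $ m) *\<^sub>R axis m 1)"
      by (induction rule: infinite_finite_induct) (auto simp: zero_prod_def)
    also have "(\<Sum>m\<in>UNIV. (v $ m) *\<^sub>R axis m (1::real)) = v"
      using basis_expansion[of v] by (simp add: scalar_mult_eq_scaleR)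
    finally show ?thesis by simp
  qed
  then have "Fh i j [(a, v)] z = Fh i j [a *\<^sub>R (1, 0) + (\<Sum>m\<in>UNIV. (v $ m) *\<^sub>R (0, axis m 1))] z" by simp
  also have "\<dots> = a * Fh i j [(1,0)] z + (\<Sum>m\<in>UNIV. v $ m * Fh i j [(0, axis m 1)] z)"
    by (simp only: L.add L.scale L.sum real_scaleR_def)
  finally show ?thesis .
qed


definition xc :: "real \<Rightarrow> real" where "xc x = max 0 (min x0 x)"

definition PP :: "real \<times> (real^'n) \<times> (real^'n) \<Rightarrow> real \<times> (real^'n)" where
  "PP w = (xc (fst w), fst (snd w))"

definition NN :: "'n \<Rightarrow> 'n \<Rightarrow> real \<times> (real^'n) \<times> (real^'n) \<Rightarrow> real" where
  "NN i j w = matrix_inv (h (fst (PP w)) (snd (PP w))) $ i $ j"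

definition HX :: "'n \<Rightarrow> 'n \<Rightarrow> real \<times> (real^'n) \<times> (real^'n) \<Rightarrow> real" where
  "HX k l w = Fh k l [(1,0)] (PP w)"

definition HY :: "'n \<Rightarrow> 'n \<Rightarrow> 'n \<Rightarrow> real \<times> (real^'n) \<times> (real^'n) \<Rightarrow> real" where
  "HY k l m w = Fh k l [(0, axis m 1)] (PP w)"

definition cE :: "real^'n \<Rightarrow> 'n \<Rightarrow> real \<times> (real^'n) \<times> (real^'n) \<Rightarrow> real" where
  "cE e0 i w = max (e0 $ i - 1) (min (e0 $ i + 1) (snd (snd w) $ i))"

definition qq :: "real^'n \<Rightarrow> real \<times> (real^'n) \<times> (real^'n) \<Rightarrow> real" where
  "qq e0 w = (\<Sum>i\<in>UNIV. \<Sum>j\<in>UNIV. cE e0 i w * cE e0 j w * NN i j w)"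

definition qx :: "real^'n \<Rightarrow> real \<times> (real^'n) \<times> (real^'n) \<Rightarrow> real" where
  "qx e0 w = - (\<Sum>i\<in>UNIV. \<Sum>j\<in>UNIV. cE e0 i w * cE e0 j w * (\<Sum>k\<in>UNIV. \<Sum>l\<in>UNIV. NN i k w * HX k l w * NN l j w))"

definition qy :: "real^'n \<Rightarrow> 'n \<Rightarrow> real \<times> (real^'n) \<times> (real^'n) \<Rightarrow> real" where
  "qy e0 m w = - (\<Sum>i\<in>UNIV. \<Sum>j\<in>UNIV. cE e0 i w * cE e0 j w * (\<Sum>k\<in>UNIV. \<Sum>l\<in>UNIV. NN i k w * HY k l m w * NN l j w))"

definition nv :: "real^'n \<Rightarrow> 'n \<Rightarrow> real \<times> (real^'n) \<times> (real^'n) \<Rightarrow> real" where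
  "nv e0 i w = (\<Sum>j\<in>UNIV. NN i j w * cE e0 j w)"

lemma xc_in: "xc x \<in> {0..x0}" using x0 by (auto simp: xc_def)

lemma PP_in: "PP w \<in> SS" using xc_in[of "fst w"] by (simp add: PP_def mem_Times_iff)

lemma LIP_comp_vec: "LIP (\<lambda>v::real^'n. v $ i)"
  by (rule LIPI[of _ 1]) (metis component_le_norm_cart mult_1 real_norm_def vector_minus_component)

lemma LIP_PP: "LIP PP"
proof -
  have "LIP (\<lambda>w::real \<times> (real^'n) \<times> (real^'n). max 0 (min x0 (fst w)))"
    by (rule BL_LIP, rule BL_clamp[OF LIP_fst]) (use x0 in simp)
  moreover have "LIP (\<lambda>w::real \<times> (real^'n) \<times> (real^'n). fst (snd w))"
    by (rule LIP_comp[OF LIP_fst LIP_snd])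
  ultimately have "LIP (\<lambda>w::real \<times> (real^'n) \<times> (real^'n). (max 0 (min x0 (fst w)), fst (snd w)))"
    by (rule LIP_pair)
  then show ?thesis unfolding PP_def xc_def .
qed

lemma BL_SS:
  assumes "\<And>z. z \<in> SS \<Longrightarrow> \<bar>\<Phi> z\<bar> \<le> B" "\<And>a b. a \<in> SS \<Longrightarrow> b \<in> SS \<Longrightarrow> \<bar>\<Phi> a - \<Phi> b\<bar> \<le> K * norm (a - b)"
  shows "BL (\<lambda>w. \<Phi> (PP w))"
proof -
  have "BL (\<lambda>z. \<Phi> (PP z))"
  proof -
    obtain L where L: "\<And>z z'. norm (PP z - PP z') \<le> L * norm (z - z')" "0 \<le> L"
      by (metis LIPE[OF LIP_PP])
    show ?thesis
    proof (rule BLI[of _ B "max K 0 * L"])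
      fix z z'
      show "\<bar>\<Phi> (PP z)\<bar> \<le> B" by (rule assms(1)[OF PP_in])
      have "\<bar>\<Phi> (PP z) - \<Phi> (PP z')\<bar> \<le> K * norm (PP z - PP z')" by (rule assms(2)[OF PP_in PP_in])
      also have "\<dots> \<le> max K 0 * norm (PP z - PP z')" by (intro mult_right_mono) auto
      also have "\<dots> \<le> max K 0 * (L * norm (z - z'))" by (intro mult_left_mono L) auto
      finally show "\<bar>\<Phi> (PP z) - \<Phi> (PP z')\<bar> \<le> max K 0 * L * norm (z - z')" by simp
    qed
  qed
  then show ?thesis .
qed

lemma BL_F: "BL (\<lambda>w. Fh i j vs (PP w))"
proof -
  obtain B where B: "\<forall>z\<in>SS. \<bar>Fh i j vs z\<bar> \<le> B" using Fbound by blast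
  obtain K where K: "\<forall>a\<in>SS. \<forall>b\<in>SS. \<bar>Fh i j vs a - Fh i j vs b\<bar> \<le> K * norm (a - b)" using Flip by blast
  show ?thesis by (rule BL_SS[of _ B K]) (use B K in auto)
qed

lemma BL_HX: "BL (HX k l)" unfolding HX_def by (rule BL_F)
lemma BL_HY: "BL (HY k l m)" unfolding HY_def by (rule BL_F)

lemma hlip: "\<exists>K. \<forall>a\<in>SS. \<forall>b\<in>SS. \<bar>h (fst a) (snd a) $ k $ l - h (fst b) (snd b) $ k $ l\<bar> \<le> K * norm (a - b)"
proof -
  obtain K where K: "\<forall>a\<in>SS. \<forall>b\<in>SS. \<bar>Fh k l [] a - Fh k l [] b\<bar> \<le> K * norm (a - b)" using Flip by blast
  have "Fh k l [] a = h (fst a) (snd a) $ k $ l" if "a \<in> SS" for a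
    using F0[of "fst a" k l "snd a"] that by (auto simp: mem_Times_iff)
  then show ?thesis using K by (intro exI[of _ K]) auto
qed

lemma Ninv: assumes "x \<in> {0..x0}"
  shows "h x y ** matrix_inv (h x y) = mat 1" "matrix_inv (h x y) ** h x y = mat 1"
    "\<bar>matrix_inv (h x y) $ i $ j\<bar> \<le> 1/c"
  using posdef_inv[OF c pd[OF assms]] by auto

lemma BL_NN: "BL (NN i j)"
proof -
  have "\<forall>k l. \<exists>K. \<forall>a\<in>SS. \<forall>b\<in>SS. \<bar>h (fst a) (snd a) $ k $ l - h (fst b) (snd b) $ k $ l\<bar> \<le> K * norm (a - b)"
    using hlip by blast
  then obtain K where K: "\<And>k l a b. a \<in> SS \<Longrightarrow> b \<in> SS \<Longrightarrow> \<bar>h (fst a) (snd a) $ k $ l - h (fst b) (snd b) $ k $ l\<bar> \<le> K k l * norm (a - b)"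
    by metis
  define KK where "KK = 1/c * (1/c) * (\<Sum>k\<in>UNIV. \<Sum>l\<in>UNIV. K k l)"
  have "BL (\<lambda>w. matrix_inv (h (fst (PP w)) (snd (PP w))) $ i $ j)"
  proof (rule BL_SS[of _ "1/c" KK])
    fix z assume "z \<in> SS"
    then show "\<bar>matrix_inv (h (fst z) (snd z)) $ i $ j\<bar> \<le> 1/c" using Ninv(3)[of "fst z"] by (auto simp: mem_Times_iff)
  next
    fix a b assume a: "a \<in> SS" and b: "b \<in> SS"
    have fa: "fst a \<in> {0..x0}" and fb: "fst b \<in> {0..x0}" using a b by (auto simp: mem_Times_iff)
    have "\<bar>matrix_inv (h (fst a) (snd a)) $ i $ j - matrix_inv (h (fst b) (snd b)) $ i $ j\<bar>
        \<le> 1/c * (1/c) * (\<Sum>k\<in>UNIV. \<Sum>l\<in>UNIV. \<bar>h (fst b) (snd b) $ k $ l - h (fst a) (snd a) $ k $ l\<bar>)"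
      by (rule inv_entry_diff[OF Ninv(1,2)[OF fa] Ninv(1,2)[OF fb] Ninv(3)[OF fa] Ninv(3)[OF fb]])
    also have "\<dots> \<le> 1/c * (1/c) * (\<Sum>k\<in>UNIV. \<Sum>l\<in>UNIV. K k l * norm (a - b))"
    proof (intro mult_left_mono sum_mono)
      fix k l
      show "\<bar>h (fst b) (snd b) $ k $ l - h (fst a) (snd a) $ k $ l\<bar> \<le> K k l * norm (a - b)"
        using K[OF a b, of k l] by (simp add: abs_minus_commute)
    qed (use c in auto)
    also have "\<dots> = KK * norm (a - b)" by (simp add: KK_def sum_distrib_right mult.assoc)
    finally show "\<bar>matrix_inv (h (fst a) (snd a)) $ i $ j - matrix_inv (h (fst b) (snd b)) $ i $ j\<bar> \<le> KK * norm (a - b)" .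
  qed
  then show ?thesis unfolding NN_def by simp
qed

lemma BL_cE: "BL (cE e0 i)"
proof -
  have "LIP (\<lambda>w::real \<times> (real^'n) \<times> (real^'n). snd (snd w) $ i)"
    by (rule LIP_comp[OF LIP_comp_vec LIP_comp[OF LIP_snd LIP_snd]])
  then have "BL (\<lambda>w::real \<times> (real^'n) \<times> (real^'n). max (e0 $ i - 1) (min (e0 $ i + 1) (snd (snd w) $ i)))"
    by (rule BL_clamp) simp
  then show ?thesis unfolding cE_def .
qed

lemma BL_qq: "BL (qq e0)"
  unfolding qq_def by (intro BL_sum BL_mult BL_cE BL_NN)

lemma BL_qx: "BL (qx e0)"
  unfolding qx_def by (intro BL_minus BL_sum BL_mult BL_cE BL_NN BL_HX)

lemma BL_qy: "BL (qy e0 m)"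
  unfolding qy_def by (intro BL_minus BL_sum BL_mult BL_cE BL_NN BL_HY)

lemma BL_nv: "BL (nv e0 i)"
  unfolding nv_def by (intro BL_sum BL_mult BL_cE BL_NN)


definition pu :: "real \<Rightarrow> real" where "pu u = max 0 (min 2 u)"
definition mu :: "real \<Rightarrow> real" where "mu u = max (-2) (min 2 u)"

definition Pr :: "real \<Rightarrow> real \<times> real \<times> (real^'n) \<times> (real^'n) \<Rightarrow> real \<times> (real^'n) \<times> (real^'n)" where
  "Pr s z = (s * pu (fst z), fst (snd (snd z)), snd (snd (snd z)))"

definition RHS :: "real \<Rightarrow> real^'n \<Rightarrow> real \<times> real \<times> (real^'n) \<times> (real^'n) \<Rightarrow> real \<times> real \<times> (real^'n) \<times> (real^'n)" where
  "RHS s e0 z = (fst (snd z),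
     - mu (fst z) * (qq e0 (Pr s z) + 1/2 * s * mu (fst z) * qx e0 (Pr s z)),
     (s^2 * (mu (fst z))^2) *\<^sub>R (\<chi> i. nv e0 i (Pr s z)),
     (- (1/2 * s^2 * (mu (fst z))^2)) *\<^sub>R (\<chi> m. qy e0 m (Pr s z)))"

lemma BL_mu: "BL (\<lambda>z::real \<times> real \<times> (real^'n) \<times> (real^'n). mu (fst z))"
  unfolding mu_def by (rule BL_clamp[OF LIP_fst]) simp

lemma LIP_Pr: "LIP (Pr s)"
proof -
  have "BL (\<lambda>z::real \<times> real \<times> (real^'n) \<times> (real^'n). s * max 0 (min 2 (fst z)))"
    by (intro BL_mult BL_const BL_clamp[OF LIP_fst]) simp
  then have a: "LIP (\<lambda>z::real \<times> real \<times> (real^'n) \<times> (real^'n). s * pu (fst z))"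
    unfolding pu_def by (rule BL_LIP)
  have b: "LIP (\<lambda>z::real \<times> real \<times> (real^'n) \<times> (real^'n). fst (snd (snd z)))"
    by (intro LIP_comp[OF LIP_fst] LIP_comp[OF LIP_snd] LIP_snd)
  have d: "LIP (\<lambda>z::real \<times> real \<times> (real^'n) \<times> (real^'n). snd (snd (snd z)))"
    by (intro LIP_comp[OF LIP_snd] LIP_comp[OF LIP_snd] LIP_snd)
  show ?thesis unfolding Pr_def by (intro LIP_pair a b d)
qed

lemma LIP_RHS: "LIP (RHS s e0)"
proof -
  have a: "LIP (\<lambda>z::real \<times> real \<times> (real^'n) \<times> (real^'n). fst (snd z))"
    by (intro LIP_comp[OF LIP_fst] LIP_snd)
  have qqP: "BL (\<lambda>z. qq e0 (Pr s z))" by (rule BL_compose_LIP[OF BL_qq LIP_Pr])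
  have qxP: "BL (\<lambda>z. qx e0 (Pr s z))" by (rule BL_compose_LIP[OF BL_qx LIP_Pr])
  have nvP: "BL (\<lambda>z. nv e0 i (Pr s z))" for i by (rule BL_compose_LIP[OF BL_nv LIP_Pr])
  have qyP: "BL (\<lambda>z. qy e0 i (Pr s z))" for i by (rule BL_compose_LIP[OF BL_qy LIP_Pr])
  have b: "BL (\<lambda>z::real \<times> real \<times> (real^'n) \<times> (real^'n). - mu (fst z) * (qq e0 (Pr s z) + 1/2 * s * mu (fst z) * qx e0 (Pr s z)))"
    by (intro BL_mult BL_minus BL_mu BL_add qqP qxP BL_const)
  have m2: "BL (\<lambda>z::real \<times> real \<times> (real^'n) \<times> (real^'n). s^2 * (mu (fst z))^2)"
    unfolding power2_eq_square[of "mu _"] by (intro BL_mult BL_const BL_mu)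
  have m3: "BL (\<lambda>z::real \<times> real \<times> (real^'n) \<times> (real^'n). - (1/2 * s^2 * (mu (fst z))^2))"
    unfolding power2_eq_square[of "mu _"] by (intro BL_minus BL_mult BL_const BL_mu)
  have c: "LIP (\<lambda>z. (s^2 * (mu (fst z))^2) *\<^sub>R (\<chi> i. nv e0 i (Pr s z)))"
    by (rule LIP_scale[OF m2 nvP])
  have d: "LIP (\<lambda>z. (- (1/2 * s^2 * (mu (fst z))^2)) *\<^sub>R (\<chi> i. qy e0 i (Pr s z)))"
    by (rule LIP_scale[OF m3 qyP])
  show ?thesis unfolding RHS_def by (intro LIP_pair a BL_LIP[OF b] c d)
qed

lemma sol_exists:
  "\<exists>\<phi>. \<phi> 0 = z0 \<and> continuous_on {0..4} \<phi> \<and>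
     (\<forall>t\<in>{0..4}. (\<phi> has_vector_derivative RHS s e0 (\<phi> t)) (at t within {0..4}))"
proof -
  obtain K where K: "\<And>z z'. norm (RHS s e0 z - RHS s e0 z') \<le> K * norm (z - z')" "0 \<le> K"
    by (metis LIPE[OF LIP_RHS])
  show ?thesis by (rule ode_exists[OF K(1) K(2)]) simp
qed


definition AY :: "real^'n \<Rightarrow> real" where "AY e0 = 4 * (\<Sum>i\<in>UNIV. Bd (nv e0 i))"
definition AEE :: "real^'n \<Rightarrow> real" where "AEE e0 = 2 * (\<Sum>i\<in>UNIV. Bd (qy e0 i))"
definition Ceps :: "real^'n \<Rightarrow> real" where
  "Ceps e0 = \<bar>Lp (qq e0)\<bar> * (2 + 4 * AY e0 + 4 * AEE e0) + Bd (qx e0)"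

lemma AY_nonneg: "0 \<le> AY e0" unfolding AY_def by (auto intro!: sum_nonneg Bd_nonneg BL_nv)
lemma AEE_nonneg: "0 \<le> AEE e0" unfolding AEE_def by (auto intro!: sum_nonneg Bd_nonneg BL_qy)
lemma Ceps_nonneg: "0 \<le> Ceps e0"
  unfolding Ceps_def using AY_nonneg AEE_nonneg Bd_nonneg[OF BL_qx] by (auto intro!: add_nonneg_nonneg mult_nonneg_nonneg)

lemma qq_conorm: assumes "x \<in> {0..x0}" "\<And>i. \<bar>E $ i - e0 $ i\<bar> \<le> 1"
  shows "qq e0 (x, y, E) = conorm2 h x y E"
proof -
  have cE: "cE e0 i (x, y, E) = E $ i" for i using assms(2)[of i] by (auto simp: cE_def)
  have NN: "NN i j (x, y, E) = matrix_inv (h x y) $ i $ j" for i j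
    using assms(1) by (auto simp: NN_def PP_def xc_def)
  show ?thesis
    by (simp add: qq_def conorm2_def cometric_def cE NN inner_vec_def matrix_vector_mult_def
          sum_distrib_left mult.assoc)
       (intro sum.cong refl, simp add: ac_simps)
qed

end

lemma bil_inner: "(\<Sum>i\<in>UNIV. \<Sum>j\<in>UNIV. a $ i * b $ j * (N::real^'n^'n) $ i $ j) = a \<bullet> (N *v b)"
  by (simp add: inner_vec_def matrix_vector_mult_def sum_distrib_left mult.assoc)
     (intro sum.cong refl, simp add: ac_simps)

lemma bil_sym: assumes "transpose (N::real^'n^'n) = N" shows "a \<bullet> (N *v b) = b \<bullet> (N *v a)"
proof -
  have Nij: "N $ i $ j = N $ j $ i" for i j
    using arg_cong[OF assms, of "\<lambda>M. M $ j $ i"] by (simp add: transpose_def)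
  have "a \<bullet> (N *v b) = (\<Sum>i\<in>UNIV. \<Sum>j\<in>UNIV. a $ i * b $ j * N $ i $ j)" by (rule bil_inner[symmetric])
  also have "\<dots> = (\<Sum>j\<in>UNIV. \<Sum>i\<in>UNIV. a $ i * b $ j * N $ i $ j)" by (rule sum.swap)
  also have "\<dots> = (\<Sum>j\<in>UNIV. \<Sum>i\<in>UNIV. b $ j * a $ i * N $ j $ i)" by (simp add: Nij mult.commute)
  also have "\<dots> = b \<bullet> (N *v a)" by (rule bil_inner)
  finally show ?thesis .
qed

context gg begin

definition NM :: "real \<times> (real^'n) \<Rightarrow> real^'n^'n" where "NM z = matrix_inv (h (fst z) (snd z))"

definition Phi :: "real \<times> (real^'n) \<Rightarrow> real^'n \<Rightarrow> real \<times> (real^'n) \<Rightarrow> real" where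
  "Phi z E w = (\<Sum>i\<in>UNIV. \<Sum>j\<in>UNIV. E $ i * E $ j *
      (- (\<Sum>k\<in>UNIV. \<Sum>l\<in>UNIV. NM z $ i $ k * Fh k l [w] z * NM z $ l $ j)))"

definition DX :: "real \<times> (real^'n) \<Rightarrow> real^'n \<Rightarrow> real" where
  "DX z E = - (\<Sum>i\<in>UNIV. \<Sum>j\<in>UNIV. E $ i * E $ j *
      (\<Sum>k\<in>UNIV. \<Sum>l\<in>UNIV. NM z $ i $ k * Fh k l [(1,0)] z * NM z $ l $ j))"

definition DYv :: "real \<times> (real^'n) \<Rightarrow> real^'n \<Rightarrow> real^'n" where
  "DYv z E = (\<chi> m. - (\<Sum>i\<in>UNIV. \<Sum>j\<in>UNIV. E $ i * E $ j *
      (\<Sum>k\<in>UNIV. \<Sum>l\<in>UNIV. NM z $ i $ k * Fh k l [(0, axis m 1)] z * NM z $ l $ j)))"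

lemma NM_props: assumes "z \<in> SS"
  shows "h (fst z) (snd z) ** NM z = mat 1" "NM z ** h (fst z) (snd z) = mat 1" "transpose (NM z) = NM z"
proof -
  have f: "fst z \<in> {0..x0}" using assms by (auto simp: mem_Times_iff)
  show a: "h (fst z) (snd z) ** NM z = mat 1" and b: "NM z ** h (fst z) (snd z) = mat 1"
    unfolding NM_def using Ninv[OF f] by auto
  show "transpose (NM z) = NM z" by (rule inv_sym[OF a b sym[OF f]])
qed

lemma N_deriv: assumes z: "z \<in> SS"
  shows "((\<lambda>z. NM z $ i $ j) has_derivative
          (\<lambda>w. - (\<Sum>k\<in>UNIV. \<Sum>l\<in>UNIV. NM z $ i $ k * Fh k l [w] z * NM z $ l $ j))) (at z within SS)"
  unfolding NM_def
proof (rule inv_deriv[OF c _ z])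
  fix w v assume "w \<in> SS"
  then show "c * (norm v)^2 \<le> v \<bullet> (h (fst w) (snd w) *v v)" by (intro pd) (auto simp: mem_Times_iff)
next
  fix k l show "((\<lambda>w. h (fst w) (snd w) $ k $ l) has_derivative (\<lambda>w. Fh k l [w] z)) (at z within SS)"
    by (rule hder[OF z])
qed

lemma G_deriv: assumes z: "z \<in> SS"
  shows "((\<lambda>z. \<Sum>i\<in>UNIV. \<Sum>j\<in>UNIV. E $ i * E $ j * NM z $ i $ j) has_derivative Phi z E) (at z within SS)"
proof -
  have "((\<lambda>z. \<Sum>i\<in>UNIV. \<Sum>j\<in>UNIV. E $ i * E $ j * NM z $ i $ j) has_derivative
      (\<lambda>w. \<Sum>i\<in>UNIV. \<Sum>j\<in>UNIV. E $ i * E $ j *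
      (- (\<Sum>k\<in>UNIV. \<Sum>l\<in>UNIV. NM z $ i $ k * Fh k l [w] z * NM z $ l $ j)))) (at z within SS)"
    by (intro has_derivative_sum has_derivative_mult_right N_deriv[OF z])
  then show ?thesis unfolding Phi_def[abs_def] .
qed

lemma Phi_eq: assumes z: "z \<in> SS"
  shows "Phi z E w = fst w * DX z E + DYv z E \<bullet> snd w"
proof -
  interpret L: linear "Phi z E" using G_deriv[OF z] by (rule has_derivative_linear)
  obtain a v where w: "w = (a, v)" by (cases w)
  have "(a, v) = a *\<^sub>R (1, 0) + (\<Sum>m\<in>UNIV. (v $ m) *\<^sub>R (0, axis m 1))"
  proof -
    have "(\<Sum>m\<in>UNIV. (v $ m) *\<^sub>R ((0::real), axis m (1::real))) = (0, \<Sum>m\<in>UNIV. (v $ m) *\<^sub>R axis m 1)"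
      by (induction rule: infinite_finite_induct) (auto simp: zero_prod_def)
    also have "(\<Sum>m\<in>UNIV. (v $ m) *\<^sub>R axis m (1::real)) = v"
      using basis_expansion[of v] by (simp add: scalar_mult_eq_scaleR)
    finally show ?thesis by simp
  qed
  then have "Phi z E (a, v) = Phi z E (a *\<^sub>R (1, 0) + (\<Sum>m\<in>UNIV. (v $ m) *\<^sub>R (0, axis m 1)))" by simp
  also have "\<dots> = a * Phi z E (1, 0) + (\<Sum>m\<in>UNIV. v $ m * Phi z E (0, axis m 1))"
    by (simp only: L.add L.scale L.sum real_scaleR_def)
  also have "Phi z E (1, 0) = DX z E" by (simp add: Phi_def DX_def sum_negf)
  also have "(\<Sum>m\<in>UNIV. v $ m * Phi z E (0, axis m 1)) = DYv z E \<bullet> v"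
    by (simp add: Phi_def DYv_def sum_negf inner_vec_def mult.commute)
  finally show ?thesis using w by simp
qed

lemma conorm_sum: "conorm2 h x y E = (\<Sum>i\<in>UNIV. \<Sum>j\<in>UNIV. E $ i * E $ j * NM (x, y) $ i $ j)"
  by (simp add: conorm2_def cometric_def NM_def bil_inner)

lemma conorm_dx: assumes x: "0 \<le> x" "x < x0"
  shows "((\<lambda>x. conorm2 h x y E) has_real_derivative DX (x, y) E) (at x within {0..})"
proof -
  have z: "(x, y) \<in> SS" using x by auto
  have "((\<lambda>x. \<Sum>i\<in>UNIV. \<Sum>j\<in>UNIV. E $ i * E $ j * NM (x, y) $ i $ j) has_derivative
        (\<lambda>d. Phi (x, y) E (d, 0))) (at x within {0..x0})"
  proof (rule has_derivative_in_compose2[of SS _ "\<lambda>z. Phi z E", where f="\<lambda>x. (x, y)"])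
    show "\<And>z. z \<in> SS \<Longrightarrow> ((\<lambda>z. \<Sum>i\<in>UNIV. \<Sum>j\<in>UNIV. E $ i * E $ j * NM z $ i $ j) has_derivative Phi z E) (at z within SS)"
      by (rule G_deriv)
    show "(\<lambda>x. (x, y)) ` {0..x0} \<subseteq> SS" by auto
    show "x \<in> {0..x0}" using x by auto
    show "((\<lambda>x. (x, y)) has_derivative (\<lambda>d. (d, 0))) (at x within {0..x0})"
      by (intro derivative_eq_intros) auto
  qed
  moreover have "(\<lambda>d. Phi (x, y) E (d, 0)) = (\<lambda>d. d * DX (x, y) E)"
    using Phi_eq[OF z] by (simp add: fun_eq_iff)
  ultimately have "((\<lambda>x. conorm2 h x y E) has_derivative (\<lambda>d. d * DX (x, y) E)) (at x within {0..x0})"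
    by (simp add: conorm_sum)
  moreover have "(\<lambda>d. d * DX (x, y) E) = (*) (DX (x, y) E)" by (simp add: fun_eq_iff mult.commute)
  ultimately have d: "((\<lambda>x. conorm2 h x y E) has_real_derivative DX (x, y) E) (at x within {0..x0})"
    by (simp add: has_field_derivative_def)
  have "at x within {0..} = at x within {0..x0}"
    by (rule at_within_nhd[of _ "{..<x0}"]) (use x in auto)
  then show ?thesis using d by simp
qed

lemma conorm_dy: assumes x: "x \<in> {0..x0}"
  shows "((\<lambda>y. conorm2 h x y E) has_derivative (\<lambda>w. DYv (x, y) E \<bullet> w)) (at y)"
proof -
  have z: "(x, y) \<in> SS" using x by auto
  have "((\<lambda>y. \<Sum>i\<in>UNIV. \<Sum>j\<in>UNIV. E $ i * E $ j * NM (x, y) $ i $ j) has_derivative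
        (\<lambda>w. Phi (x, y) E (0, w))) (at y within UNIV)"
  proof (rule has_derivative_in_compose2[of SS _ "\<lambda>z. Phi z E", where f="\<lambda>y. (x, y)"])
    show "\<And>z. z \<in> SS \<Longrightarrow> ((\<lambda>z. \<Sum>i\<in>UNIV. \<Sum>j\<in>UNIV. E $ i * E $ j * NM z $ i $ j) has_derivative Phi z E) (at z within SS)"
      by (rule G_deriv)
    show "(\<lambda>y. (x, y)) ` UNIV \<subseteq> SS" using x by auto
    show "((\<lambda>y. (x, y)) has_derivative (\<lambda>w. (0, w))) (at y within UNIV)"
      by (intro derivative_eq_intros) auto
  qed simp
  moreover have "(\<lambda>w. Phi (x, y) E (0, w)) = (\<lambda>w. DYv (x, y) E \<bullet> w)"
    using Phi_eq[OF z] by (simp add: fun_eq_iff)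
  ultimately show ?thesis by (simp add: conorm_sum)
qed

lemma PP_id: "x \<in> {0..x0} \<Longrightarrow> PP (x, y, E) = (x, y)"
  by (auto simp: PP_def xc_def)

lemma NN_id: "x \<in> {0..x0} \<Longrightarrow> NN i j (x, y, E) = NM (x, y) $ i $ j"
  by (simp add: NN_def PP_id NM_def)

lemma cE_id: "(\<And>i. \<bar>E $ i - e0 $ i\<bar> \<le> 1) \<Longrightarrow> cE e0 i (x, y, E) = E $ i"
  using abs_le_iff by (auto simp: cE_def) (smt (verit))

lemma qx_id: assumes "x \<in> {0..x0}" "\<And>i. \<bar>E $ i - e0 $ i\<bar> \<le> 1"
  shows "qx e0 (x, y, E) = DX (x, y) E"
  using assms by (simp add: qx_def DX_def cE_id NN_id HX_def PP_id)

lemma qy_id: assumes "x \<in> {0..x0}" "\<And>i. \<bar>E $ i - e0 $ i\<bar> \<le> 1"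
  shows "qy e0 m (x, y, E) = DYv (x, y) E $ m"
  using assms by (simp add: qy_def DYv_def cE_id NN_id HY_def PP_id)

lemma nv_id: assumes "x \<in> {0..x0}" "\<And>i. \<bar>E $ i - e0 $ i\<bar> \<le> 1"
  shows "nv e0 i (x, y, E) = (NM (x, y) *v E) $ i"
  using assms by (simp add: nv_def cE_id NN_id matrix_vector_mult_def)

lemma qq_id: assumes "x \<in> {0..x0}" "\<And>i. \<bar>E $ i - e0 $ i\<bar> \<le> 1"
  shows "qq e0 (x, y, E) = conorm2 h x y E"
  using qq_conorm[OF assms] .

end

lemma hvd_fst: "(f has_vector_derivative D) F \<Longrightarrow> ((\<lambda>t. fst (f t)) has_vector_derivative fst D) F"
  unfolding has_vector_derivative_def by (drule has_derivative_fst) simp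

lemma hvd_snd: "(f has_vector_derivative D) F \<Longrightarrow> ((\<lambda>t. snd (f t)) has_vector_derivative snd D) F"
  unfolding has_vector_derivative_def by (drule has_derivative_snd) simp

lemma onorm_scale_le: "onorm (\<lambda>h::real. h *\<^sub>R D) \<le> norm D"
  by (rule onorm_le) (simp add: mult.commute)


lemma lin_helper:
  fixes P R X Yy W e :: real
  assumes "4 * P \<le> 2 * X + 2 * Yy" "4 * R \<le> 2 * e + 2 * W" "2 * W \<le> Yy" "0 \<le> X"
  shows "4 * P + 4 * R \<le> 3 * (X + Yy) + 2 * e"
  using assms by argo


lemma sq_small: "(a::real) * a \<le> 1/100 \<Longrightarrow> \<bar>a\<bar> \<le> 1/10"
proof -
  assume "a * a \<le> 1/100"
  then have "a^2 \<le> (1/10)^2" by (simp add: power2_eq_square)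
  then have "\<bar>a\<bar> \<le> \<bar>1/10\<bar>" by (simp only: abs_le_square_iff)
  then show ?thesis by simp
qed

lemma cos_half: fixes x :: real assumes "0 \<le> x" "x \<le> 1/2" shows "7/8 \<le> cos x"
proof -
  have "cos x = cos (2 * (x/2))" by simp
  also have "\<dots> = 1 - 2 * sin (x/2) ^ 2" by (rule cos_double_sin)
  finally have e: "cos x = 1 - 2 * sin (x/2) ^ 2" .
  have "\<bar>sin (x/2)\<bar> \<le> \<bar>x/2\<bar>" by (rule abs_sin_x_le_abs_x)
  also have "\<dots> \<le> \<bar>1/4\<bar>" using assms by simp
  finally have "sin (x/2) ^ 2 \<le> (1/4)^2" by (simp only: abs_le_square_iff)
  moreover have "(1/4::real)^2 = 1/16" by (simp add: power2_eq_square)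
  ultimately show ?thesis using e by linarith
qed

lemma sin_half: "1/4 \<le> sin (1/2::real)"
proof -
  have "\<bar>sin (1/2::real) - (\<Sum>m<3. sin_coeff m * (1/2) ^ m)\<bar> \<le> inverse (fact 3) * \<bar>1/2\<bar> ^ 3"
    by (rule Maclaurin_sin_bound)
  moreover have "(\<Sum>m<3. sin_coeff m * (1/2::real) ^ m) = 1/2"
    by (simp add: eval_nat_numeral sin_coeff_def)
  ultimately have "\<bar>sin (1/2::real) - 1/2\<bar> \<le> inverse (fact 3) * (1/2) ^ 3" by simp
  moreover have "inverse (fact 3) * (1/2::real) ^ 3 = 1/48" by (simp add: eval_nat_numeral)
  ultimately show ?thesis by linarith
qed

lemma sin_mid: assumes "1/2 \<le> t" "t \<le> pi - 1/2" shows "1/4 \<le> sin t"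
proof (cases "t \<le> pi/2")
  case True
  have "sin (1/2) \<le> sin t"
    using True assms pi_gt3 by (subst sin_mono_le_eq) auto
  then show ?thesis using sin_half by linarith
next
  case False
  have "sin (1/2) \<le> sin (pi - t)"
    using False assms pi_gt3 by (subst sin_mono_le_eq) auto
  then show ?thesis using sin_half by simp
qed

lemma pi_le: "pi + 1/2 \<le> 4" using pi_approx(2) by simp

locale gsol = gg h x0 c Fh for h :: "real \<Rightarrow> real^'n \<Rightarrow> real^'n^'n" and x0 c Fh +
  fixes s :: real and y0 e0 :: "real^'n" and \<phi> :: "real \<Rightarrow> real \<times> real \<times> (real^'n) \<times> (real^'n)"
  assumes one: "conorm2 h 0 y0 e0 = 1"
    and s_pos: "0 < s" and s_le1: "s \<le> 1" and s_x0: "2 * s < x0"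
    and s_E: "s * (4 * AEE e0) < 1" and s_eps: "s * Ceps e0 \<le> exp (-12) / 100"
    and phi0: "\<phi> 0 = (0, 1, y0, e0)"
    and phic: "continuous_on {0..4} \<phi>"
    and phid: "\<And>t. t \<in> {0..4} \<Longrightarrow> (\<phi> has_vector_derivative RHS s e0 (\<phi> t)) (at t within {0..4})"
begin

lemma mu_bound: "\<bar>mu x\<bar> \<le> 2" by (simp add: mu_def)
lemma mu_sq: "(mu x)^2 \<le> 4"
proof -
  have "(mu x)^2 = \<bar>mu x\<bar>^2" by simp
  also have "\<dots> \<le> 2^2" by (rule power_mono[OF mu_bound]) simp
  finally show ?thesis by simp
qed

definition u where "u = (\<lambda>t. fst (\<phi> t))"
definition v where "v = (\<lambda>t. fst (snd (\<phi> t)))"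
definition Yf where "Yf = (\<lambda>t. fst (snd (snd (\<phi> t))))"
definition Ef where "Ef = (\<lambda>t. snd (snd (snd (\<phi> t))))"
definition Q where "Q t = qq e0 (Pr s (\<phi> t)) + 1/2 * s * mu (u t) * qx e0 (Pr s (\<phi> t))"
definition DY where "DY t = (s^2 * (mu (u t))^2) *\<^sub>R (\<chi> i. nv e0 i (Pr s (\<phi> t)))"
definition DE where "DE t = (- (1/2 * s^2 * (mu (u t))^2)) *\<^sub>R (\<chi> m. qy e0 m (Pr s (\<phi> t)))"

lemma u0: "u 0 = 0" and v0: "v 0 = 1" and Y0: "Yf 0 = y0" and E0: "Ef 0 = e0"
  by (simp_all add: u_def v_def Yf_def Ef_def phi0)

lemma du: "t \<in> {0..4} \<Longrightarrow> (u has_vector_derivative v t) (at t within {0..4})"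
  using hvd_fst[OF phid[of t]] by (simp add: u_def v_def RHS_def)

lemma dv: "t \<in> {0..4} \<Longrightarrow> (v has_vector_derivative (- mu (u t) * Q t)) (at t within {0..4})"
  using hvd_fst[OF hvd_snd[OF phid[of t]]] by (simp add: u_def v_def RHS_def Q_def)

lemma dY: "t \<in> {0..4} \<Longrightarrow> (Yf has_vector_derivative DY t) (at t within {0..4})"
  using hvd_fst[OF hvd_snd[OF hvd_snd[OF phid[of t]]]] by (simp add: u_def Yf_def RHS_def DY_def)

lemma dE: "t \<in> {0..4} \<Longrightarrow> (Ef has_vector_derivative DE t) (at t within {0..4})"
  using hvd_snd[OF hvd_snd[OF hvd_snd[OF phid[of t]]]] by (simp add: u_def Ef_def RHS_def DE_def)

lemma cont_u: "continuous_on {0..4} u" unfolding u_def by (intro continuous_intros phic)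
lemma cont_v: "continuous_on {0..4} v" unfolding v_def by (intro continuous_intros phic)

lemma vec_l1_bound: "norm (\<chi> i. (f i :: real)) \<le> (\<Sum>i\<in>UNIV. \<bar>f i\<bar>)"
  using norm_le_l1_cart[of "\<chi> i. f i"] by simp

lemma DY_bound: "norm (DY t) \<le> s^2 * AY e0"
proof -
  have "norm (\<chi> i. nv e0 i (Pr s (\<phi> t))) \<le> (\<Sum>i\<in>UNIV. Bd (nv e0 i))"
    by (rule order_trans[OF vec_l1_bound sum_mono]) (rule Bd[OF BL_nv])
  moreover have "\<bar>s^2 * (mu (u t))^2\<bar> \<le> s^2 * 4"
    using mult_left_mono[OF mu_sq[of "u t"], of "s^2"] by (simp add: abs_mult)
  ultimately have "\<bar>s^2 * (mu (u t))^2\<bar> * norm (\<chi> i. nv e0 i (Pr s (\<phi> t))) \<le> (s^2 * 4) * (\<Sum>i\<in>UNIV. Bd (nv e0 i))"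
    by (intro mult_mono) auto
  then show ?thesis by (simp add: DY_def AY_def)
qed

lemma DE_bound: "norm (DE t) \<le> s^2 * AEE e0"
proof -
  have "norm (\<chi> i. qy e0 i (Pr s (\<phi> t))) \<le> (\<Sum>i\<in>UNIV. Bd (qy e0 i))"
    by (rule order_trans[OF vec_l1_bound sum_mono]) (rule Bd[OF BL_qy])
  moreover have "\<bar>- (1/2 * s^2 * (mu (u t))^2)\<bar> \<le> s^2 * 2"
    using mult_left_mono[OF mu_sq[of "u t"], of "s^2"] by (simp add: abs_mult)
  ultimately have "\<bar>- (1/2 * s^2 * (mu (u t))^2)\<bar> * norm (\<chi> i. qy e0 i (Pr s (\<phi> t))) \<le> (s^2 * 2) * (\<Sum>i\<in>UNIV. Bd (qy e0 i))"
    by (intro mult_mono) auto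
  then show ?thesis by (simp add: DE_def AEE_def)
qed

lemma vec_mvt:
  fixes f :: "real \<Rightarrow> 'a::real_normed_vector"
  assumes "t \<in> {0..4}" "\<And>x. x \<in> {0..4} \<Longrightarrow> (f has_vector_derivative D x) (at x within {0..4})"
    "\<And>x. norm (D x) \<le> B"
  shows "norm (f t - f 0) \<le> B * t"
proof -
  have "norm (f t - f 0) \<le> B * norm (t - 0)"
  proof (rule differentiable_bound[of "{0..t}" f "\<lambda>x h. h *\<^sub>R D x"])
    show "convex {0..t}" by simp
    fix x assume x: "x \<in> {0..t}"
    then have "x \<in> {0..4}" using assms(1) by auto
    then show "(f has_derivative (\<lambda>h. h *\<^sub>R D x)) (at x within {0..t})"
      using has_vector_derivative_within_subset[OF assms(2) , of x "{0..t}"] assms(1)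
      unfolding has_vector_derivative_def by auto
    show "onorm (\<lambda>h. h *\<^sub>R D x) \<le> B" by (rule order_trans[OF onorm_scale_le assms(3)])
  qed (use assms(1) in auto)
  then show ?thesis using assms(1) by simp
qed

lemma Y_bound: "t \<in> {0..4} \<Longrightarrow> norm (Yf t - y0) \<le> s^2 * AY e0 * t"
  using vec_mvt[OF _ dY DY_bound] Y0 by simp

lemma E_bound: "t \<in> {0..4} \<Longrightarrow> norm (Ef t - e0) \<le> s^2 * AEE e0 * t"
  using vec_mvt[OF _ dE DE_bound] E0 by simp

lemma s2: "s^2 \<le> s" using s_pos s_le1 by (simp add: power2_eq_square mult_left_le)

lemma E_comp: assumes "t \<in> {0..4}" shows "\<bar>Ef t $ i - e0 $ i\<bar> < 1"
proof -
  have "\<bar>Ef t $ i - e0 $ i\<bar> \<le> norm (Ef t - e0)"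
    using component_le_norm_cart[of "Ef t - e0" i] by simp
  also have "\<dots> \<le> s^2 * AEE e0 * t" by (rule E_bound[OF assms])
  also have "\<dots> \<le> s * AEE e0 * 4"
    using assms s2 AEE_nonneg[of e0] s_pos by (intro mult_mono) auto
  also have "\<dots> < 1" using s_E by simp
  finally show ?thesis .
qed


lemma Pr_phi: "Pr s (\<phi> t) = (s * pu (u t), Yf t, Ef t)"
  by (simp add: Pr_def u_def Yf_def Ef_def)

lemma qq_base: "qq e0 (0, y0, e0) = 1"
  using qq_conorm[of 0 e0 e0 y0] x0 one by simp

lemma pu_bound: "0 \<le> pu x" "pu x \<le> 2" by (auto simp: pu_def)

lemma Q_bound: assumes t: "t \<in> {0..4}" shows "\<bar>Q t - 1\<bar> \<le> s * Ceps e0"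
proof -
  have n1: "norm (Pr s (\<phi> t) - (0, y0, e0)) \<le> s * 2 + s * (4 * AY e0) + s * (4 * AEE e0)"
  proof -
    have "norm (Pr s (\<phi> t) - (0, y0, e0)) = norm (s * pu (u t), Yf t - y0, Ef t - e0)"
      by (simp add: Pr_phi)
    also have "\<dots> \<le> norm (s * pu (u t)) + norm (Yf t - y0, Ef t - e0)" by (rule norm_Pair_le)
    also have "\<dots> \<le> norm (s * pu (u t)) + (norm (Yf t - y0) + norm (Ef t - e0))"
      by (intro add_left_mono norm_Pair_le)
    also have "norm (s * pu (u t)) \<le> s * 2" using pu_bound[of "u t"] s_pos by (simp add: abs_mult)
    also have "norm (Yf t - y0) \<le> s * (4 * AY e0)"
    proof -
      have "norm (Yf t - y0) \<le> s^2 * AY e0 * t" by (rule Y_bound[OF t])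
      also have "\<dots> \<le> s * AY e0 * 4" using t s2 AY_nonneg[of e0] s_pos by (intro mult_mono) auto
      finally show ?thesis by simp
    qed
    also have "norm (Ef t - e0) \<le> s * (4 * AEE e0)"
    proof -
      have "norm (Ef t - e0) \<le> s^2 * AEE e0 * t" by (rule E_bound[OF t])
      also have "\<dots> \<le> s * AEE e0 * 4" using t s2 AEE_nonneg[of e0] s_pos by (intro mult_mono) auto
      finally show ?thesis by simp
    qed
    finally show ?thesis by simp
  qed
  have a: "\<bar>qq e0 (Pr s (\<phi> t)) - 1\<bar> \<le> \<bar>Lp (qq e0)\<bar> * (s * (2 + 4 * AY e0 + 4 * AEE e0))"
  proof -
    have "\<bar>qq e0 (Pr s (\<phi> t)) - qq e0 (0, y0, e0)\<bar> \<le> \<bar>Lp (qq e0)\<bar> * norm (Pr s (\<phi> t) - (0, y0, e0))"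
      by (rule Lp_abs[OF BL_qq])
    also have "\<dots> \<le> \<bar>Lp (qq e0)\<bar> * (s * (2 + 4 * AY e0 + 4 * AEE e0))"
      using n1 by (intro mult_left_mono) (auto simp: algebra_simps)
    finally show ?thesis by (simp add: qq_base)
  qed
  have b: "\<bar>1/2 * s * mu (u t) * qx e0 (Pr s (\<phi> t))\<bar> \<le> s * Bd (qx e0)"
  proof -
    have "\<bar>1/2 * s * mu (u t) * qx e0 (Pr s (\<phi> t))\<bar> = 1/2 * s * (\<bar>mu (u t)\<bar> * \<bar>qx e0 (Pr s (\<phi> t))\<bar>)"
      using s_pos by (simp add: abs_mult)
    also have "\<dots> \<le> 1/2 * s * (2 * Bd (qx e0))"
      using s_pos by (intro mult_left_mono mult_mono mu_bound Bd[OF BL_qx]) auto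
    finally show ?thesis by simp
  qed
  have "\<bar>Q t - 1\<bar> \<le> \<bar>qq e0 (Pr s (\<phi> t)) - 1\<bar> + \<bar>1/2 * s * mu (u t) * qx e0 (Pr s (\<phi> t))\<bar>"
    unfolding Q_def by linarith
  also have "\<dots> \<le> \<bar>Lp (qq e0)\<bar> * (s * (2 + 4 * AY e0 + 4 * AEE e0)) + s * Bd (qx e0)"
    using a b by linarith
  also have "\<dots> = s * Ceps e0" by (simp add: Ceps_def algebra_simps)
  finally show ?thesis .
qed

definition ep where "ep = s * Ceps e0"

lemma ep_nonneg: "0 \<le> ep" unfolding ep_def using s_pos Ceps_nonneg[of e0] by simp
lemma ep_small: "ep \<le> exp (-12) / 100" unfolding ep_def using s_eps by simp
lemma ep_half: "ep \<le> 1/2"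
proof -
  have "exp (-12::real) \<le> 1" by simp
  then show ?thesis using ep_small by linarith
qed

lemma key_ineq:
  fixes a b M S Qv ep :: real
  assumes "\<bar>M - S\<bar> \<le> \<bar>a\<bar>" "\<bar>M\<bar> \<le> 2" "\<bar>Qv - 1\<bar> \<le> ep" "0 \<le> ep" "ep \<le> 1/2"
  shows "2 * a * b + 2 * b * (- M * Qv + S) \<le> 3 * (a * a + b * b) + 2 * ep"
proof -
  have e: "- M * Qv + S = - (M - S) - M * (Qv - 1)" by (simp add: algebra_simps)
  have t1: "2 * a * b \<le> 2 * \<bar>a\<bar> * \<bar>b\<bar>" by (simp add: abs_mult[symmetric] mult.assoc)
  have t2: "2 * b * (- (M - S)) \<le> 2 * \<bar>b\<bar> * \<bar>a\<bar>"
  proof -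
    have "2 * b * (- (M - S)) \<le> \<bar>2 * b * (- (M - S))\<bar>" by (rule abs_ge_self)
    also have "\<dots> = 2 * \<bar>b\<bar> * \<bar>M - S\<bar>" by (simp add: abs_mult abs_minus_commute)
    finally have "2 * b * (- (M - S)) \<le> 2 * \<bar>b\<bar> * \<bar>M - S\<bar>" .
    also have "\<dots> \<le> 2 * \<bar>b\<bar> * \<bar>a\<bar>" using assms(1) by (intro mult_left_mono) auto
    finally show ?thesis .
  qed
  have t3: "2 * b * (- (M * (Qv - 1))) \<le> 2 * \<bar>b\<bar> * (2 * ep)"
  proof -
    have "2 * b * (- (M * (Qv - 1))) \<le> \<bar>2 * b * (- (M * (Qv - 1)))\<bar>" by (rule abs_ge_self)
    also have "\<dots> = 2 * \<bar>b\<bar> * (\<bar>M\<bar> * \<bar>Qv - 1\<bar>)" by (simp add: abs_mult)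
    finally have "2 * b * (- (M * (Qv - 1))) \<le> 2 * \<bar>b\<bar> * (\<bar>M\<bar> * \<bar>Qv - 1\<bar>)" .
    also have "\<dots> \<le> 2 * \<bar>b\<bar> * (2 * ep)" using assms by (intro mult_left_mono mult_mono) auto
    finally show ?thesis .
  qed
  have s1: "4 * (\<bar>a\<bar> * \<bar>b\<bar>) \<le> 2 * (a * a) + 2 * (b * b)"
  proof -
    have "0 \<le> (\<bar>a\<bar> - \<bar>b\<bar>) * (\<bar>a\<bar> - \<bar>b\<bar>)" by simp
    then show ?thesis by (simp add: algebra_simps abs_mult_self_eq)
  qed
  have s2: "4 * (ep * \<bar>b\<bar>) \<le> 2 * ep + 2 * (ep * (b * b))"
  proof -
    have "0 \<le> ep * ((\<bar>b\<bar> - 1) * (\<bar>b\<bar> - 1))" using assms(4) by simp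
    then show ?thesis by (simp add: algebra_simps abs_mult_self_eq)
  qed
  have s3: "2 * (ep * (b * b)) \<le> b * b"
    using mult_right_mono[OF assms(5), of "b * b"] by simp
  have "2 * a * b + 2 * b * (- M * Qv + S) = 2 * a * b + 2 * b * (- (M - S)) + 2 * b * (- (M * (Qv - 1)))"
    unfolding e by (simp add: algebra_simps)
  also have "\<dots> \<le> 2 * \<bar>a\<bar> * \<bar>b\<bar> + 2 * \<bar>b\<bar> * \<bar>a\<bar> + 2 * \<bar>b\<bar> * (2 * ep)"
    using t1 t2 t3 by linarith
  also have "\<dots> = 4 * (\<bar>a\<bar> * \<bar>b\<bar>) + 4 * (ep * \<bar>b\<bar>)" by (simp add: algebra_simps)
  also have "\<dots> \<le> 3 * (a * a + b * b) + 2 * ep" by (rule lin_helper[OF s1 s2 s3 zero_le_square])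
  finally show ?thesis .
qed

definition mm where "mm t = (u t - sin t) * (u t - sin t) + (v t - cos t) * (v t - cos t)"

lemma mu_sin: "mu (sin x) = sin x"
proof -
  have "\<not> 2 \<le> sin x" "- 2 \<le> sin x" using sin_le_one[of x] sin_ge_minus_one[of x] by linarith+
  then show ?thesis by (simp add: mu_def max_def min_def)
qed

lemma mm_bound: assumes t: "t \<in> {0..4}" shows "mm t \<le> ep * exp (3 * t)"
proof -
  define D where "D x = exp (- 3 * x) * (- 3) * (mm x + ep) + exp (- 3 * x) *
      (((v x - cos x) * (u x - sin x) + (v x - cos x) * (u x - sin x)) +
       ((- mu (u x) * Q x + sin x) * (v x - cos x) + (- mu (u x) * Q x + sin x) * (v x - cos x)))" for x
  define \<psi> where "\<psi> x = exp (- 3 * x) * (mm x + ep)" for x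
  have dpsi: "(\<psi> has_field_derivative D x) (at x within {0..4})" if x: "x \<in> {0..4}" for x
  proof -
    have du': "(u has_field_derivative v x) (at x within {0..4})"
      using du[OF x] by (simp add: has_real_derivative_iff_has_vector_derivative)
    have dv': "(v has_field_derivative (- mu (u x) * Q x)) (at x within {0..4})"
      using dv[OF x] by (simp add: has_real_derivative_iff_has_vector_derivative)
    have ds: "(sin has_field_derivative cos x) (at x within {0..4})"
      by (rule has_field_derivative_at_within[OF DERIV_sin])
    have dc: "(cos has_field_derivative - sin x) (at x within {0..4})"
      by (rule has_field_derivative_at_within[OF DERIV_cos])
    have da: "((\<lambda>x. u x - sin x) has_field_derivative v x - cos x) (at x within {0..4})"
      by (rule DERIV_diff[OF du' ds])
    have db: "((\<lambda>x. v x - cos x) has_field_derivative (- mu (u x) * Q x) - - sin x) (at x within {0..4})"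
      by (rule DERIV_diff[OF dv' dc])
    have dm: "(mm has_field_derivative
        ((v x - cos x) * (u x - sin x) + (v x - cos x) * (u x - sin x)) +
        (((- mu (u x) * Q x) - - sin x) * (v x - cos x) + ((- mu (u x) * Q x) - - sin x) * (v x - cos x))) (at x within {0..4})"
      unfolding mm_def[abs_def] by (intro DERIV_add DERIV_mult da db)
    have de: "((\<lambda>x. exp (- 3 * x)) has_field_derivative exp (- 3 * x) * (- 3)) (at x within {0..4})"
    proof -
      have "((\<lambda>x. - 3 * x) has_field_derivative - 3 * 1) (at x within {0..4})"
        by (rule DERIV_cmult[OF DERIV_ident])
      then show ?thesis using DERIV_chain'[of "\<lambda>x. - 3 * x" "- 3 * 1" x "{0..4}" exp] by simp
    qed
    have "(\<psi> has_field_derivative exp (- 3 * x) * (((v x - cos x) * (u x - sin x) + (v x - cos x) * (u x - sin x)) +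
        (((- mu (u x) * Q x) - - sin x) * (v x - cos x) + ((- mu (u x) * Q x) - - sin x) * (v x - cos x)) + 0)
        + exp (- 3 * x) * (- 3) * (mm x + ep)) (at x within {0..4})"
      unfolding \<psi>_def[abs_def] by (intro DERIV_mult' de DERIV_add dm DERIV_const)
    then show ?thesis by (rule DERIV_cong) (simp add: D_def algebra_simps)
  qed
  have Dneg: "D x \<le> 0" if x: "x \<in> {0..4}" for x
  proof -
    have "2 * (u x - sin x) * (v x - cos x) + 2 * (v x - cos x) * (- mu (u x) * Q x + sin x)
          \<le> 3 * ((u x - sin x) * (u x - sin x) + (v x - cos x) * (v x - cos x)) + 2 * ep"
    proof (rule key_ineq)
      show "\<bar>mu (u x) - sin x\<bar> \<le> \<bar>u x - sin x\<bar>"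
        using clamp_lip[of "-2" 2 "u x" "sin x"] mu_sin[of x] by (simp add: mu_def)
      show "\<bar>mu (u x)\<bar> \<le> 2" by (rule mu_bound)
      show "\<bar>Q x - 1\<bar> \<le> ep" using Q_bound[OF x] by (simp add: ep_def)
    qed (use ep_nonneg ep_half in auto)
    then have "exp (- 3 * x) * ((2 * (u x - sin x) * (v x - cos x) + 2 * (v x - cos x) * (- mu (u x) * Q x + sin x))
         - 3 * (mm x + ep)) \<le> exp (- 3 * x) * 0"
      using ep_nonneg by (intro mult_left_mono) (auto simp: mm_def)
    then show ?thesis by (simp add: D_def algebra_simps)
  qed
  have "\<exists>\<xi>\<in>{0..t}. \<psi> t - \<psi> 0 = (\<lambda>h. h * D \<xi>) (t - 0)"
  proof (rule mvt_very_simple)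
    show "0 \<le> t" using t by simp
    fix x assume "0 \<le> x" "x \<le> t"
    then have x: "x \<in> {0..4}" using t by auto
    have "(\<psi> has_field_derivative D x) (at x within {0..t})"
      by (rule has_field_derivative_subset[OF dpsi[OF x]]) (use t in auto)
    moreover have "(\<lambda>h. h * D x) = (*) (D x)" by (simp add: fun_eq_iff mult.commute)
    ultimately show "(\<psi> has_derivative (\<lambda>h. h * D x)) (at x within {0..t})"
      by (simp add: has_field_derivative_def)
  qed
  then obtain \<xi> where \<xi>: "\<xi> \<in> {0..t}" "\<psi> t - \<psi> 0 = t * D \<xi>" by auto
  have "t * D \<xi> \<le> 0" using Dneg[of \<xi>] \<xi>(1) t by (auto simp: mult_nonneg_nonpos)
  then have "\<psi> t \<le> \<psi> 0" using \<xi>(2) by simp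
  moreover have "\<psi> 0 = ep" by (simp add: \<psi>_def mm_def u0 v0)
  ultimately have "exp (- 3 * t) * (mm t + ep) \<le> ep" by (simp add: \<psi>_def)
  then have "exp (3 * t) * (exp (- 3 * t) * (mm t + ep)) \<le> exp (3 * t) * ep" by (intro mult_left_mono) auto
  then have "mm t + ep \<le> exp (3 * t) * ep" by (simp add: exp_minus_inverse mult.assoc[symmetric] exp_add[symmetric])
  moreover have "0 \<le> ep" by (rule ep_nonneg)
  ultimately show ?thesis by (simp add: mult.commute)
qed


lemma uv_close: assumes t: "t \<in> {0..4}" shows "\<bar>u t - sin t\<bar> \<le> 1/10" "\<bar>v t - cos t\<bar> \<le> 1/10"
proof -
  have "mm t \<le> ep * exp (3 * t)" by (rule mm_bound[OF t])
  also have "\<dots> \<le> exp (-12) / 100 * exp 12"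
    using t ep_small ep_nonneg by (intro mult_mono) auto
  also have "\<dots> = 1/100" by (simp add: exp_minus field_simps)
  finally have m: "mm t \<le> 1/100" .
  have "(u t - sin t) * (u t - sin t) \<le> 1/100"
    using m zero_le_square[of "v t - cos t"] unfolding mm_def by linarith
  then show "\<bar>u t - sin t\<bar> \<le> 1/10" by (rule sq_small)
  have "(v t - cos t) * (v t - cos t) \<le> 1/100"
    using m zero_le_square[of "u t - sin t"] unfolding mm_def by linarith
  then show "\<bar>v t - cos t\<bar> \<le> 1/10" by (rule sq_small)
qed

lemma u_le: "t \<in> {0..4} \<Longrightarrow> u t \<le> 11/10"
  using uv_close(1)[of t] sin_le_one[of t] by linarith

lemma u_pos1: assumes "0 < t" "t \<le> 1/2" shows "0 < u t"
proof -
  have "\<exists>\<xi>\<in>{0..t}. u t - u 0 = (\<lambda>h. h * v \<xi>) (t - 0)"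
  proof (rule mvt_very_simple)
    show "0 \<le> t" using assms by simp
    fix x assume x: "0 \<le> x" "x \<le> t"
    then have "x \<in> {0..4}" using assms by auto
    then have "(u has_field_derivative v x) (at x within {0..4})"
      using du by (simp add: has_real_derivative_iff_has_vector_derivative)
    then have "(u has_field_derivative v x) (at x within {0..t})"
      by (rule has_field_derivative_subset) (use assms in auto)
    moreover have "(\<lambda>h. h * v x) = (*) (v x)" by (simp add: fun_eq_iff mult.commute)
    ultimately show "(u has_derivative (\<lambda>h. h * v x)) (at x within {0..t})"
      by (simp add: has_field_derivative_def)
  qed
  then obtain \<xi> where \<xi>: "\<xi> \<in> {0..t}" "u t - u 0 = t * v \<xi>" by auto
  have "7/8 \<le> cos \<xi>" using \<xi>(1) assms by (intro cos_half) auto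
  moreover have "\<bar>v \<xi> - cos \<xi>\<bar> \<le> 1/10" using \<xi>(1) assms by (intro uv_close) auto
  ultimately have "0 < v \<xi>" by linarith
  then show ?thesis using \<xi>(2) u0 assms by simp
qed

lemma u_pos2: assumes "1/2 \<le> t" "t \<le> pi - 1/2" shows "0 < u t"
proof -
  have "t \<in> {0..4}" using assms pi_less_4 by auto
  then show ?thesis using uv_close(1)[of t] sin_mid[OF assms] by linarith
qed

lemma u_neg: "u (pi + 1/2) < 0"
proof -
  have "pi + 1/2 \<in> {0..4}" using pi_le pi_gt3 by auto
  then have "u (pi + 1/2) \<le> sin (pi + 1/2) + 1/10" using uv_close(1)[of "pi + 1/2"] unfolding abs_le_iff by linarith
  moreover have "sin (pi + 1/2) = - sin (1/2)" by (rule sin_periodic_pi2)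
  ultimately show ?thesis using sin_half by linarith
qed

definition Tz where "Tz = Inf {t \<in> {pi - 1/2 .. pi + 1/2}. u t = 0}"

lemma Tz_props: "Tz \<in> {pi - 1/2 .. pi + 1/2}" "u Tz = 0"
  "\<And>t. t \<in> {pi - 1/2 .. pi + 1/2} \<Longrightarrow> u t = 0 \<Longrightarrow> Tz \<le> t"
proof -
  define Z where "Z = {t \<in> {pi - 1/2 .. pi + 1/2}. u t = 0}"
  have sub: "{pi - 1/2 .. pi + 1/2} \<subseteq> {0..4}" using pi_le pi_gt3 by auto
  have cu: "continuous_on {pi - 1/2 .. pi + 1/2} u" by (rule continuous_on_subset[OF cont_u sub])
  have "\<exists>x. pi - 1/2 \<le> x \<and> x \<le> pi + 1/2 \<and> u x = 0"
  proof (rule IVT2')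
    show "u (pi + 1/2) \<le> 0" using u_neg by simp
    show "0 \<le> u (pi - 1/2)" using u_pos2[of "pi - 1/2"] pi_gt3 by simp
  qed (use cu in auto)
  then have ne: "Z \<noteq> {}" unfolding Z_def by auto
  have cl: "closed Z" unfolding Z_def by (rule continuous_closed_preimage_constant[OF cu]) simp
  have bb: "bdd_below Z" unfolding Z_def by (rule bdd_belowI[of _ "pi - 1/2"]) auto
  have "Inf Z \<in> Z" by (rule closed_contains_Inf[OF ne bb cl])
  then show "Tz \<in> {pi - 1/2 .. pi + 1/2}" "u Tz = 0" unfolding Tz_def Z_def[symmetric] by (auto simp: Z_def)
  fix t assume "t \<in> {pi - 1/2 .. pi + 1/2}" "u t = 0"
  then have "t \<in> Z" by (simp add: Z_def)
  then show "Tz \<le> t" unfolding Tz_def Z_def[symmetric] by (rule cInf_lower[OF _ bb])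
qed

lemma Tz_bounds: "2 < Tz" "Tz \<le> 4"
  using Tz_props(1) pi_gt3 pi_le by auto

lemma u_pos: assumes "0 < t" "t < Tz" shows "0 < u t"
proof -
  consider "t \<le> 1/2" | "1/2 \<le> t \<and> t \<le> pi - 1/2" | "pi - 1/2 < t" by linarith
  then show ?thesis
  proof cases
    case 1 then show ?thesis using u_pos1 assms by auto
  next
    case 2 then show ?thesis using u_pos2 by auto
  next
    case 3
    show ?thesis
    proof (rule ccontr)
      assume "\<not> 0 < u t"
      then have ut: "u t \<le> 0" by simp
      have sub: "{pi - 1/2 .. t} \<subseteq> {0..4}" using assms Tz_bounds pi_gt3 by auto
      have "\<exists>x. pi - 1/2 \<le> x \<and> x \<le> t \<and> u x = 0"
      proof (rule IVT2')
        show "u t \<le> 0" by (rule ut)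
        show "0 \<le> u (pi - 1/2)" using u_pos2[of "pi - 1/2"] pi_gt3 by simp
        show "pi - 1/2 \<le> t" using 3 by simp
        show "continuous_on {pi - 1/2 .. t} u" by (rule continuous_on_subset[OF cont_u sub])
      qed
      then obtain x where x: "pi - 1/2 \<le> x" "x \<le> t" "u x = 0" by blast
      have "x \<in> {pi - 1/2 .. pi + 1/2}" using x assms Tz_props(1) by auto
      then have "Tz \<le> x" using Tz_props(3) x(3) by blast
      then show False using x assms by simp
    qed
  qed
qed


definition Xf where "Xf = (\<lambda>t. s * u t)"
definition Xif where "Xif = (\<lambda>t. s * v t)"

lemma in4: "t \<in> {0..Tz} \<Longrightarrow> t \<in> {0..4}" using Tz_bounds by auto

lemma u_nonneg: assumes "t \<in> {0..Tz}" shows "0 \<le> u t"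
proof -
  consider "t = 0" | "t = Tz" | "0 < t \<and> t < Tz" using assms by force
  then show ?thesis
  proof cases
    case 1 then show ?thesis by (simp add: u0)
  next
    case 2 then show ?thesis by (simp add: Tz_props(2))
  next
    case 3 then show ?thesis using u_pos by force
  qed
qed

lemma pu_id: "t \<in> {0..Tz} \<Longrightarrow> pu (u t) = u t"
  using u_nonneg[of t] u_le[OF in4, of t] by (simp add: pu_def)

lemma mu_id: "t \<in> {0..Tz} \<Longrightarrow> mu (u t) = u t"
  using u_nonneg[of t] u_le[OF in4, of t] by (simp add: mu_def)

lemma X_range: assumes "t \<in> {0..Tz}" shows "0 \<le> Xf t" "Xf t < x0" "Xf t \<in> {0..x0}"
proof -
  have "0 \<le> u t" "u t \<le> 11/10" using u_nonneg[OF assms] u_le[OF in4[OF assms]] by auto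
  then have a: "0 \<le> s * u t" "s * u t \<le> s * (11/10)" using s_pos by (auto intro: mult_left_mono)
  have b: "s * u t < x0" using a(2) s_x0 s_pos by linarith
  show "0 \<le> Xf t" "Xf t < x0" "Xf t \<in> {0..x0}" using a(1) b by (auto simp: Xf_def)
qed

lemma E_near: "t \<in> {0..Tz} \<Longrightarrow> \<bar>Ef t $ i - e0 $ i\<bar> \<le> 1"
  using E_comp[OF in4] by (simp add: less_imp_le)

lemma Pr_id: "t \<in> {0..Tz} \<Longrightarrow> Pr s (\<phi> t) = (Xf t, Yf t, Ef t)"
  by (simp add: Pr_phi pu_id Xf_def)

lemma qq_t: "t \<in> {0..Tz} \<Longrightarrow> qq e0 (Pr s (\<phi> t)) = conorm2 h (Xf t) (Yf t) (Ef t)"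
  using qq_id[OF X_range(3) E_near] by (simp add: Pr_id)

lemma qx_t: "t \<in> {0..Tz} \<Longrightarrow> qx e0 (Pr s (\<phi> t)) = DX (Xf t, Yf t) (Ef t)"
  using qx_id[OF X_range(3) E_near] by (simp add: Pr_id)

lemma qy_t: "t \<in> {0..Tz} \<Longrightarrow> qy e0 m (Pr s (\<phi> t)) = DYv (Xf t, Yf t) (Ef t) $ m"
  using qy_id[OF X_range(3) E_near] by (simp add: Pr_id)

lemma nv_t: "t \<in> {0..Tz} \<Longrightarrow> nv e0 i (Pr s (\<phi> t)) = (NM (Xf t, Yf t) *v Ef t) $ i"
  using nv_id[OF X_range(3) E_near] by (simp add: Pr_id)

lemma DY_t: "t \<in> {0..Tz} \<Longrightarrow> DY t = (Xf t)^2 *\<^sub>R (NM (Xf t, Yf t) *v Ef t)"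
  by (simp add: DY_def nv_t mu_id Xf_def power_mult_distrib vec_lambda_eta)

lemma DE_t: "t \<in> {0..Tz} \<Longrightarrow> DE t = (- (1/2 * (Xf t)^2)) *\<^sub>R DYv (Xf t, Yf t) (Ef t)"
  by (simp add: DE_def qy_t mu_id Xf_def power_mult_distrib vec_lambda_eta)

lemma dXi_val: "t \<in> {0..Tz} \<Longrightarrow> s * (- mu (u t) * Q t) =
    - (Xf t * conorm2 h (Xf t) (Yf t) (Ef t)) - 1/2 * (Xf t)^2 * DX (Xf t, Yf t) (Ef t)"
  by (simp add: Q_def qq_t qx_t mu_id Xf_def power2_eq_square algebra_simps)

lemma cometric_NM: "cometric h x y = NM (x, y)" by (simp add: cometric_def NM_def)

lemma sub4: "{0..Tz} \<subseteq> {0..4}" using Tz_bounds by auto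

lemma dX: "t \<in> {0..Tz} \<Longrightarrow> (Xf has_real_derivative Xif t) (at t within {0..Tz})"
proof -
  assume t: "t \<in> {0..Tz}"
  have "(u has_real_derivative v t) (at t within {0..4})"
    using du[OF in4[OF t]] by (simp add: has_real_derivative_iff_has_vector_derivative)
  then have "((\<lambda>t. s * u t) has_real_derivative s * v t) (at t within {0..4})" by (rule DERIV_cmult)
  then show ?thesis unfolding Xf_def Xif_def by (rule has_field_derivative_subset[OF _ sub4])
qed

lemma dXi: "t \<in> {0..Tz} \<Longrightarrow> (Xif has_real_derivative
    (- (Xf t * conorm2 h (Xf t) (Yf t) (Ef t)) - 1/2 * (Xf t)^2 * DX (Xf t, Yf t) (Ef t))) (at t within {0..Tz})"
proof -
  assume t: "t \<in> {0..Tz}"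
  have "(v has_real_derivative (- mu (u t) * Q t)) (at t within {0..4})"
    using dv[OF in4[OF t]] by (simp add: has_real_derivative_iff_has_vector_derivative)
  then have "((\<lambda>t. s * v t) has_real_derivative s * (- mu (u t) * Q t)) (at t within {0..4})" by (rule DERIV_cmult)
  then have "(Xif has_real_derivative s * (- mu (u t) * Q t)) (at t within {0..Tz})"
    unfolding Xif_def by (rule has_field_derivative_subset[OF _ sub4])
  then show ?thesis using dXi_val[OF t] by simp
qed

lemma dY_T: "t \<in> {0..Tz} \<Longrightarrow> (Yf has_vector_derivative (Xf t)^2 *\<^sub>R (cometric h (Xf t) (Yf t) *v Ef t)) (at t within {0..Tz})"
  using has_vector_derivative_within_subset[OF dY[OF in4] sub4] DY_t by (simp add: cometric_NM)

lemma dE_T: "t \<in> {0..Tz} \<Longrightarrow> (Ef has_vector_derivative (- (1/2 * (Xf t)^2)) *\<^sub>R DYv (Xf t, Yf t) (Ef t)) (at t within {0..Tz})"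
  using has_vector_derivative_within_subset[OF dE[OF in4] sub4] DE_t by simp

lemma geo: "geodesic_flow_curve h Xf Yf Xif Ef Tz"
  unfolding geodesic_flow_curve_def
proof (intro conjI ballI)
  show "0 \<le> Tz" using Tz_bounds by simp
  fix t assume t: "t \<in> {0..Tz}"
  show "(Xf has_real_derivative Xif t) (at t within {0..Tz})" by (rule dX[OF t])
  show "(Yf has_vector_derivative (Xf t)^2 *\<^sub>R (cometric h (Xf t) (Yf t) *v Ef t)) (at t within {0..Tz})"
    by (rule dY_T[OF t])
  show "\<exists>dx dy. ((\<lambda>x. conorm2 h x (Yf t) (Ef t)) has_real_derivative dx) (at (Xf t) within {0..}) \<and>
          ((\<lambda>y. conorm2 h (Xf t) y (Ef t)) has_derivative (\<lambda>v. dy \<bullet> v)) (at (Yf t)) \<and>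
          (Xif has_real_derivative (- (Xf t * conorm2 h (Xf t) (Yf t) (Ef t)) - 1/2 * (Xf t)^2 * dx)) (at t within {0..Tz}) \<and>
          (Ef has_vector_derivative (- (1/2 * (Xf t)^2)) *\<^sub>R dy) (at t within {0..Tz})"
  proof (intro exI conjI)
    show "((\<lambda>x. conorm2 h x (Yf t) (Ef t)) has_real_derivative DX (Xf t, Yf t) (Ef t)) (at (Xf t) within {0..})"
      by (rule conorm_dx[OF X_range(1,2)[OF t]])
    show "((\<lambda>y. conorm2 h (Xf t) y (Ef t)) has_derivative (\<lambda>v. DYv (Xf t, Yf t) (Ef t) \<bullet> v)) (at (Yf t))"
      by (rule conorm_dy[OF X_range(3)[OF t]])
    show "(Xif has_real_derivative (- (Xf t * conorm2 h (Xf t) (Yf t) (Ef t)) - 1/2 * (Xf t)^2 * DX (Xf t, Yf t) (Ef t))) (at t within {0..Tz})"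
      by (rule dXi[OF t])
    show "(Ef has_vector_derivative (- (1/2 * (Xf t)^2)) *\<^sub>R DYv (Xf t, Yf t) (Ef t)) (at t within {0..Tz})"
      by (rule dE_T[OF t])
  qed
qed


definition cv where "cv = (\<lambda>t. (Xf t, Yf t))"

lemma cv_in: "t \<in> {0..Tz} \<Longrightarrow> cv t \<in> SS" using X_range(3) by (auto simp: cv_def)

lemma curve_d: assumes t: "t \<in> {0..Tz}"
  shows "(cv has_derivative (\<lambda>d. d *\<^sub>R (Xif t, DY t))) (at t within {0..Tz})"
proof -
  have a: "(Xf has_derivative (\<lambda>d. d * Xif t)) (at t within {0..Tz})"
    using dX[OF t] by (simp add: has_field_derivative_def mult.commute[of _ "Xif t"] fun_eq_iff)
  have b: "(Yf has_derivative (\<lambda>d. d *\<^sub>R DY t)) (at t within {0..Tz})"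
    using has_vector_derivative_within_subset[OF dY[OF in4[OF t]] sub4] by (simp add: has_vector_derivative_def)
  have "((\<lambda>t. (Xf t, Yf t)) has_derivative (\<lambda>d. (d * Xif t, d *\<^sub>R DY t))) (at t within {0..Tz})"
    by (rule has_derivative_Pair[OF a b])
  then show ?thesis by (simp add: cv_def)
qed

lemma gN_d: assumes t: "t \<in> {0..Tz}"
  shows "((\<lambda>t. NM (cv t) $ i $ j) has_real_derivative
     (- (\<Sum>k\<in>UNIV. \<Sum>l\<in>UNIV. NM (cv t) $ i $ k * Fh k l [(Xif t, DY t)] (cv t) * NM (cv t) $ l $ j))) (at t within {0..Tz})"
proof -
  have "((\<lambda>t. NM (cv t) $ i $ j) has_derivative
      (\<lambda>d. - (\<Sum>k\<in>UNIV. \<Sum>l\<in>UNIV. NM (cv t) $ i $ k * Fh k l [d *\<^sub>R (Xif t, DY t)] (cv t) * NM (cv t) $ l $ j))) (at t within {0..Tz})"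
  proof (rule has_derivative_in_compose2[of SS "\<lambda>z. NM z $ i $ j", where f=cv])
    show "\<And>z. z \<in> SS \<Longrightarrow> ((\<lambda>z. NM z $ i $ j) has_derivative (\<lambda>w. - (\<Sum>k\<in>UNIV. \<Sum>l\<in>UNIV. NM z $ i $ k * Fh k l [w] z * NM z $ l $ j))) (at z within SS)"
      by (rule N_deriv)
    show "cv ` {0..Tz} \<subseteq> SS" using cv_in by blast
    show "t \<in> {0..Tz}" by (rule t)
    show "(cv has_derivative (\<lambda>d. d *\<^sub>R (Xif t, DY t))) (at t within {0..Tz})" by (rule curve_d[OF t])
  qed
  then show ?thesis
  proof (rule has_derivative_imp_has_field_derivative)
    fix d :: real
    interpret L: linear "\<lambda>w. Fh k l [w] (cv t)" for k l using Flin[OF cv_in[OF t]] .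
    have "Fh k l [d *\<^sub>R (Xif t, DY t)] (cv t) = d * Fh k l [(Xif t, DY t)] (cv t)" for k l
      by (simp only: L.scale real_scaleR_def)
    then show "d * - (\<Sum>k\<in>UNIV. \<Sum>l\<in>UNIV. NM (cv t) $ i $ k * Fh k l [(Xif t, DY t)] (cv t) * NM (cv t) $ l $ j) =
      - (\<Sum>k\<in>UNIV. \<Sum>l\<in>UNIV. NM (cv t) $ i $ k * Fh k l [d *\<^sub>R (Xif t, DY t)] (cv t) * NM (cv t) $ l $ j)"
      by (simp add: sum_distrib_left ac_simps)
  qed
qed


definition DEv where "DEv t = (- (1/2 * (Xf t)^2)) *\<^sub>R DYv (cv t) (Ef t)"

lemma Ecomp_d: assumes t: "t \<in> {0..Tz}"
  shows "((\<lambda>t. Ef t $ i) has_real_derivative DEv t $ i) (at t within {0..Tz})"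
proof -
  have "(Ef has_derivative (\<lambda>d. d *\<^sub>R DEv t)) (at t within {0..Tz})"
    using dE_T[OF t] by (simp add: has_vector_derivative_def DEv_def cv_def)
  then have "((\<lambda>t. Ef t $ i) has_derivative (\<lambda>d. (d *\<^sub>R DEv t) $ i)) (at t within {0..Tz})"
    by (rule bounded_linear.has_derivative[OF bounded_linear_vec_nth])
  then show ?thesis by (rule has_derivative_imp_has_field_derivative) simp
qed

definition gfun where "gfun t = (\<Sum>i\<in>UNIV. \<Sum>j\<in>UNIV. Ef t $ i * Ef t $ j * NM (cv t) $ i $ j)"

lemma gfun_conorm: "gfun t = conorm2 h (Xf t) (Yf t) (Ef t)"
  by (simp add: gfun_def conorm_sum cv_def)

lemma sum_sym_part:
  fixes a b :: "real^'n" and N :: "real^'n^'n"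
  shows "(\<Sum>i\<in>UNIV. \<Sum>j\<in>UNIV. (a $ i * b $ j + a $ j * b $ i) * N $ i $ j + P i j)
       = a \<bullet> (N *v b) + b \<bullet> (N *v a) + (\<Sum>i\<in>UNIV. \<Sum>j\<in>UNIV. P i j)"
proof -
  have "(\<Sum>i\<in>UNIV. \<Sum>j\<in>UNIV. (a $ i * b $ j + a $ j * b $ i) * N $ i $ j + P i j)
      = (\<Sum>i\<in>UNIV. \<Sum>j\<in>UNIV. a $ i * b $ j * N $ i $ j) + (\<Sum>i\<in>UNIV. \<Sum>j\<in>UNIV. b $ i * a $ j * N $ i $ j)
        + (\<Sum>i\<in>UNIV. \<Sum>j\<in>UNIV. P i j)"
    by (simp add: sum.distrib algebra_simps)
  then show ?thesis by (simp only: bil_inner)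
qed

lemma g_d: assumes t: "t \<in> {0..Tz}"
  shows "(gfun has_real_derivative Xif t * DX (cv t) (Ef t)) (at t within {0..Tz})"
proof -
  define Np where "Np i j = - (\<Sum>k\<in>UNIV. \<Sum>l\<in>UNIV. NM (cv t) $ i $ k * Fh k l [(Xif t, DY t)] (cv t) * NM (cv t) $ l $ j)" for i j
  have "(gfun has_real_derivative (\<Sum>i\<in>UNIV. \<Sum>j\<in>UNIV.
      (DEv t $ i * Ef t $ j + DEv t $ j * Ef t $ i) * NM (cv t) $ i $ j + Np i j * (Ef t $ i * Ef t $ j))) (at t within {0..Tz})"
    unfolding gfun_def[abs_def] Np_def by (intro DERIV_sum DERIV_mult Ecomp_d[OF t] gN_d[OF t])
  moreover have "(\<Sum>i\<in>UNIV. \<Sum>j\<in>UNIV.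
      (DEv t $ i * Ef t $ j + DEv t $ j * Ef t $ i) * NM (cv t) $ i $ j + Np i j * (Ef t $ i * Ef t $ j))
      = Xif t * DX (cv t) (Ef t)"
  proof -
    have z: "cv t \<in> SS" by (rule cv_in[OF t])
    have P: "(\<Sum>i\<in>UNIV. \<Sum>j\<in>UNIV. Np i j * (Ef t $ i * Ef t $ j)) = Phi (cv t) (Ef t) (Xif t, DY t)"
      by (simp add: Phi_def Np_def mult.commute)
    have sy: "Ef t \<bullet> (NM (cv t) *v DEv t) = DEv t \<bullet> (NM (cv t) *v Ef t)"
      by (rule bil_sym[OF NM_props(3)[OF z]])
    have DYe: "DY t = (Xf t)^2 *\<^sub>R (NM (cv t) *v Ef t)" using DY_t[OF t] by (simp add: cv_def)
    show ?thesis
      unfolding sum_sym_part P Phi_eq[OF z] sy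
      by (simp add: DEv_def DYe algebra_simps)
  qed
  ultimately show ?thesis by simp
qed

lemma energy: assumes t: "t \<in> {0..Tz}"
  shows "(Xif t)^2 + (Xf t)^2 * conorm2 h (Xf t) (Yf t) (Ef t) = s^2"
proof -
  define H where "H t = Xif t * Xif t + Xf t * Xf t * gfun t" for t
  have dH: "(H has_real_derivative 0) (at x within {0..Tz})" if x: "x \<in> {0..Tz}" for x
  proof -
    have "(H has_real_derivative
        ((- (Xf x * conorm2 h (Xf x) (Yf x) (Ef x)) - 1/2 * (Xf x)^2 * DX (Xf x, Yf x) (Ef x)) * Xif x +
         (- (Xf x * conorm2 h (Xf x) (Yf x) (Ef x)) - 1/2 * (Xf x)^2 * DX (Xf x, Yf x) (Ef x)) * Xif x) +
        ((Xif x * Xf x + Xif x * Xf x) * gfun x + Xif x * DX (cv x) (Ef x) * (Xf x * Xf x))) (at x within {0..Tz})"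
      unfolding H_def[abs_def] by (intro DERIV_add DERIV_mult dXi[OF x] dX[OF x] g_d[OF x])
    moreover have "((- (Xf x * conorm2 h (Xf x) (Yf x) (Ef x)) - 1/2 * (Xf x)^2 * DX (Xf x, Yf x) (Ef x)) * Xif x +
         (- (Xf x * conorm2 h (Xf x) (Yf x) (Ef x)) - 1/2 * (Xf x)^2 * DX (Xf x, Yf x) (Ef x)) * Xif x) +
        ((Xif x * Xf x + Xif x * Xf x) * gfun x + Xif x * DX (cv x) (Ef x) * (Xf x * Xf x)) = 0"
      by (simp add: gfun_conorm cv_def power2_eq_square algebra_simps)
    ultimately show ?thesis by simp
  qed
  have "\<exists>\<xi>\<in>{0..t}. H t - H 0 = (\<lambda>h. h * 0) (t - 0)"
  proof (rule mvt_very_simple)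
    show "0 \<le> t" using t by simp
    fix x assume "0 \<le> x" "x \<le> t"
    then have x: "x \<in> {0..Tz}" using t by auto
    have "(H has_real_derivative 0) (at x within {0..t})"
      by (rule has_field_derivative_subset[OF dH[OF x]]) (use t in auto)
    moreover have e: "(\<lambda>h::real. h * 0) = (*) 0" by (simp add: fun_eq_iff)
    ultimately show "(H has_derivative (\<lambda>h. h * 0)) (at x within {0..t})"
      unfolding has_field_derivative_def e by blast
  qed
  then have "H t = H 0" by simp
  moreover have "H 0 = s^2" by (simp add: H_def Xif_def Xf_def u0 v0 power2_eq_square)
  ultimately show ?thesis by (simp add: H_def gfun_conorm power2_eq_square)
qed


lemma integrand_eq: assumes t: "t \<in> {0<..<Tz}"
  shows "sqrt ((vector_derivative Xf (at t within {0..Tz}))^2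
          + (vector_derivative Yf (at t within {0..Tz})) \<bullet>
              (h (Xf t) (Yf t) *v vector_derivative Yf (at t within {0..Tz})) / (Xf t)^2) = s"
proof -
  have t': "t \<in> {0..Tz}" using t by auto
  have T0: "0 < Tz" using Tz_bounds by simp
  have vX: "vector_derivative Xf (at t within {0..Tz}) = Xif t"
    by (rule vector_derivative_within_closed_interval[OF T0 t'])
       (use dX[OF t'] in \<open>simp add: has_real_derivative_iff_has_vector_derivative\<close>)
  have vY: "vector_derivative Yf (at t within {0..Tz}) = (Xf t)^2 *\<^sub>R (NM (Xf t, Yf t) *v Ef t)"
    by (rule vector_derivative_within_closed_interval[OF T0 t'])
       (use dY_T[OF t'] in \<open>simp add: cometric_NM\<close>)
  have Xpos: "0 < Xf t" using u_pos[of t] t s_pos by (auto simp: Xf_def)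
  have z: "(Xf t, Yf t) \<in> SS" using X_range(3)[OF t'] by auto
  have hN: "h (Xf t) (Yf t) *v (NM (Xf t, Yf t) *v Ef t) = Ef t"
    using NM_props(1)[OF z] by (simp add: matrix_vector_mul_assoc)
  have c2: "conorm2 h (Xf t) (Yf t) (Ef t) = Ef t \<bullet> (NM (Xf t, Yf t) *v Ef t)"
    by (simp add: conorm2_def cometric_NM)
  have "(vector_derivative Yf (at t within {0..Tz})) \<bullet> (h (Xf t) (Yf t) *v vector_derivative Yf (at t within {0..Tz})) / (Xf t)^2
      = (Xf t)^2 * conorm2 h (Xf t) (Yf t) (Ef t)"
    unfolding vY c2 using Xpos
    by (simp add: matrix_vector_mult_scaleR hN inner_commute power2_eq_square field_simps)
  then have "(vector_derivative Xf (at t within {0..Tz}))^2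
          + (vector_derivative Yf (at t within {0..Tz})) \<bullet>
              (h (Xf t) (Yf t) *v vector_derivative Yf (at t within {0..Tz})) / (Xf t)^2 = s^2"
    using energy[OF t'] vX by simp
  then show ?thesis using s_pos by simp
qed

lemma length: "g_length_is h Xf Yf Tz (s * Tz)"
  unfolding g_length_is_def
proof -
  have T0: "0 \<le> Tz" using Tz_bounds by simp
  have c: "((\<lambda>t. s) has_integral (s * Tz)) {0..Tz}"
    using has_integral_const_real[of s 0 Tz] T0 by (simp add: mult.commute)
  show "((\<lambda>t. sqrt ((vector_derivative Xf (at t within {0..Tz}))^2
          + (vector_derivative Yf (at t within {0..Tz})) \<bullet>
              (h (Xf t) (Yf t) *v vector_derivative Yf (at t within {0..Tz})) / (Xf t)^2)) has_integral s * Tz) {0..Tz}"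
  proof (rule has_integral_spike_finite_eq[of "{0, Tz}", THEN iffD1, OF _ _ c])
    fix t assume "t \<in> {0..Tz} - {0, Tz}"
    then have "t \<in> {0<..<Tz}" by auto
    then show "sqrt ((vector_derivative Xf (at t within {0..Tz}))^2
          + (vector_derivative Yf (at t within {0..Tz})) \<bullet>
              (h (Xf t) (Yf t) *v vector_derivative Yf (at t within {0..Tz})) / (Xf t)^2) = s"
      by (rule integrand_eq)
  qed simp
qed

lemma final: "\<exists>T X Y Xi E L.
                  geodesic_flow_curve h X Y Xi E T \<and>
                  X 0 = 0 \<and> Y 0 = y0 \<and> Xi 0 = s \<and> E 0 = e0 \<and>
                  (\<forall>t\<in>{0<..<T}. 0 < X t) \<and> X T = 0 \<and>
                  0 < T \<and> T \<le> 4 \<and>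
                  g_length_is h X Y T L \<and>
                  0 < L \<and> L = s * T \<and> L \<le> 4 * s"
proof (intro exI conjI ballI)
  show "geodesic_flow_curve h Xf Yf Xif Ef Tz" by (rule geo)
  show "Xf 0 = 0" by (simp add: Xf_def u0)
  show "Yf 0 = y0" by (rule Y0)
  show "Xif 0 = s" by (simp add: Xif_def v0)
  show "Ef 0 = e0" by (rule E0)
  fix t assume "t \<in> {0<..<Tz}"
  then show "0 < Xf t" using u_pos[of t] s_pos by (auto simp: Xf_def)
next
  show "Xf Tz = 0" by (simp add: Xf_def Tz_props(2))
  show "0 < Tz" "Tz \<le> 4" using Tz_bounds by auto
  show "g_length_is h Xf Yf Tz (s * Tz)" by (rule length)
  show "0 < s * Tz" using Tz_bounds s_pos by simp
  show "s * Tz = s * Tz" ..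
  show "s * Tz \<le> 4 * s" using Tz_bounds s_pos by (simp add: mult.commute)
qed

end

context gg begin

lemma main: "conorm2 h 0 y0 e0 = 1 \<Longrightarrow>
           (\<exists>s0>0. \<forall>s. 0 < s \<and> s < s0 \<longrightarrow>
              (\<exists>T X Y Xi E L.
                  geodesic_flow_curve h X Y Xi E T \<and>
                  X 0 = 0 \<and> Y 0 = y0 \<and> Xi 0 = s \<and> E 0 = e0 \<and>
                  (\<forall>t\<in>{0<..<T}. 0 < X t) \<and> X T = 0 \<and>
                  0 < T \<and> T \<le> 4 \<and>
                  g_length_is h X Y T L \<and>
                  0 < L \<and> L = s * T \<and> L \<le> 4 * s))"
proof -
  assume one: "conorm2 h 0 y0 e0 = 1"
  define s0 where "s0 = min 1 (min (x0/2) (min (1 / (4 * AEE e0 + 1)) (exp (-12) / (100 * (Ceps e0 + 1)))))"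
  have A0: "0 \<le> AEE e0" by (rule AEE_nonneg)
  have C0: "0 \<le> Ceps e0" by (rule Ceps_nonneg)
  have s0pos: "0 < s0" unfolding s0_def using x0 A0 C0 by auto
  show ?thesis
  proof (rule exI[of _ s0], intro conjI allI impI)
    show "0 < s0" by (rule s0pos)
    fix s assume s: "0 < s \<and> s < s0"
    have s1: "s \<le> 1" using s by (simp add: s0_def)
    have s2: "2 * s < x0" using s by (simp add: s0_def)
    have s3: "s * (4 * AEE e0) < 1"
    proof -
      have "s < 1 / (4 * AEE e0 + 1)" using s by (simp add: s0_def)
      then have "s * (4 * AEE e0 + 1) < 1" using A0 by (simp add: field_simps)
      then show ?thesis using s by (simp add: algebra_simps)
    qed
    have s4: "s * Ceps e0 \<le> exp (-12) / 100"
    proof -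
      have "s < exp (-12) / (100 * (Ceps e0 + 1))" using s by (simp add: s0_def)
      then have "s * (100 * (Ceps e0 + 1)) < exp (-12)" using C0 by (simp add: field_simps)
      then have "s * Ceps e0 * 100 \<le> exp (-12)" using s by (simp add: algebra_simps)
      then show ?thesis by simp
    qed
    obtain \<phi> where phi: "\<phi> 0 = (0, 1, y0, e0)" "continuous_on {0..4} \<phi>"
      "\<forall>t\<in>{0..4}. (\<phi> has_vector_derivative RHS s e0 (\<phi> t)) (at t within {0..4})"
      using sol_exists[of "(0, 1, y0, e0)" s e0] by blast
    interpret S: gsol h x0 c Fh s y0 e0 \<phi>
      by (unfold_locales) (use one s s1 s2 s3 s4 phi in auto)
    show "\<exists>T X Y Xi E L.
                  geodesic_flow_curve h X Y Xi E T \<and>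
                  X 0 = 0 \<and> Y 0 = y0 \<and> Xi 0 = s \<and> E 0 = e0 \<and>
                  (\<forall>t\<in>{0<..<T}. 0 < X t) \<and> X T = 0 \<and>
                  0 < T \<and> T \<le> 4 \<and>
                  g_length_is h X Y T L \<and>
                  0 < L \<and> L = s * T \<and> L \<le> 4 * s"
      by (rule S.final)
  qed
qed

end

theorem lemma5p3:
  fixes h :: "real \<Rightarrow> real^'n \<Rightarrow> real^'n^'n" and x0 :: real
  assumes "gas_giant_family h x0"
  shows "\<exists>C>0. \<forall>(y::real^'n) (\<eta>::real^'n). conorm2 h 0 y \<eta> = 1 \<longrightarrow>
           (\<exists>s0>0. \<forall>s. 0 < s \<and> s < s0 \<longrightarrow>
              (\<exists>T X Y Xi E L.
                  geodesic_flow_curve h X Y Xi E T \<and>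
                  X 0 = 0 \<and> Y 0 = y \<and> Xi 0 = s \<and> E 0 = \<eta> \<and>
                  (\<forall>t\<in>{0<..<T}. 0 < X t) \<and> X T = 0 \<and>
                  0 < T \<and> T \<le> C \<and>
                  g_length_is h X Y T L \<and>
                  0 < L \<and> L = s * T \<and> L \<le> C * s))"
proof -
  from assms have x0: "0 < x0"
    and sym: "\<forall>x\<in>{0..x0}. \<forall>y. transpose (h x y) = h x y"
    and pdx: "\<exists>c>0. \<forall>x\<in>{0..x0}. \<forall>y v. c * (norm v)^2 \<le> v \<bullet> (h x y *v v)"
    and sm: "\<forall>i j. smooth_bdd_on ({0..x0} \<times> UNIV) (\<lambda>(x, y). h x y $ i $ j)"
    unfolding gas_giant_family_def by auto
  obtain c where c: "0 < c" "\<forall>x\<in>{0..x0}. \<forall>y v. c * (norm v)^2 \<le> v \<bullet> (h x y *v v)" using pdx by blast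
  have "\<forall>p. \<exists>F :: (real \<times> (real^'n)) list \<Rightarrow> real \<times> (real^'n) \<Rightarrow> real.
        (\<forall>z\<in>{0..x0} \<times> UNIV. F [] z = (\<lambda>(x, y). h x y $ fst p $ snd p) z) \<and>
        (\<forall>vs. continuous_on ({0..x0} \<times> UNIV) (F vs)) \<and>
        (\<forall>vs. \<forall>z\<in>{0..x0} \<times> UNIV. (F vs has_derivative (\<lambda>w. F (w # vs) z)) (at z within {0..x0} \<times> UNIV)) \<and>
        (\<forall>vs. \<exists>B. \<forall>z\<in>{0..x0} \<times> UNIV. \<bar>F vs z\<bar> \<le> B * prod_list (map norm vs))"
    using sm unfolding smooth_bdd_on_def by blast
  then obtain G where G: "\<And>p. (\<forall>z\<in>{0..x0} \<times> UNIV. G p [] z = (\<lambda>(x, y). h x y $ fst p $ snd p) z) \<and>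
        (\<forall>vs. continuous_on ({0..x0} \<times> UNIV) (G p vs)) \<and>
        (\<forall>vs. \<forall>z\<in>{0..x0} \<times> UNIV. (G p vs has_derivative (\<lambda>w. G p (w # vs) z)) (at z within {0..x0} \<times> UNIV)) \<and>
        (\<forall>vs. \<exists>B. \<forall>z\<in>{0..x0} \<times> UNIV. \<bar>G p vs z\<bar> \<le> B * prod_list (map norm vs))"
    by (metis (no_types))
  define Fh where "Fh i j = G (i, j)" for i j
  interpret gg h x0 c Fh
  proof
    show "0 < x0" by (rule x0)
    show "0 < c" by (rule c(1))
    show "\<And>x y. x \<in> {0..x0} \<Longrightarrow> transpose (h x y) = h x y" using sym by blast
    show "\<And>x y v. x \<in> {0..x0} \<Longrightarrow> c * (norm v)^2 \<le> v \<bullet> (h x y *v v)" using c(2) by blast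
    show "\<And>i j x y. x \<in> {0..x0} \<Longrightarrow> Fh i j [] (x, y) = h x y $ i $ j"
      using G unfolding Fh_def by auto
    show "\<And>i j vs z. z \<in> {0..x0} \<times> UNIV \<Longrightarrow>
               (Fh i j vs has_derivative (\<lambda>w. Fh i j (w # vs) z)) (at z within {0..x0} \<times> UNIV)"
      using G unfolding Fh_def by blast
    show "\<And>i j vs. \<exists>B. \<forall>z\<in>{0..x0} \<times> UNIV. \<bar>Fh i j vs z\<bar> \<le> B * prod_list (map norm vs)"
      using G unfolding Fh_def by blast
  qed
  show ?thesis
  proof (rule exI[of _ 4], intro conjI allI impI)
    fix y \<eta> :: "real^'n" assume "conorm2 h 0 y \<eta> = 1"
    then show "\<exists>s0>0. \<forall>s. 0 < s \<and> s < s0 \<longrightarrow>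
              (\<exists>T X Y Xi E L.
                  geodesic_flow_curve h X Y Xi E T \<and>
                  X 0 = 0 \<and> Y 0 = y \<and> Xi 0 = s \<and> E 0 = \<eta> \<and>
                  (\<forall>t\<in>{0<..<T}. 0 < X t) \<and> X T = 0 \<and>
                  0 < T \<and> T \<le> 4 \<and>
                  g_length_is h X Y T L \<and>
                  0 < L \<and> L = s * T \<and> L \<le> 4 * s)"
      by (rule main)
  qed simp
qed

end
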